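(* Let $0<\alpha\le 2$, $j\in\mathbb{R}\setminus\{0\}$ and $V\in C^2(\mathbb{T})$. Let $$G(x)=p_0+\sum_{k=1}^{n}p_k\cos(2\pi kx)+\sum_{k=1}^{n}q_k\sin(2\pi kx)$$ for some $n\in\mathbb{N}$ and real $p_0,\dots,p_n,q_1,\dots,q_n$ with $p_k^2+q_k^2>0$ for $1\le k\le n$. Assume $G$ satisfies the monotonicity condition (M) and the positivity condition (W). Then problem (P) has a unique solution $(m,\overline{H})$. Moreover, $$m(x)=\frac{c_j}{\left(a_0^*+\sum_{k=1}^{n}a_k^*\cos(2\pi kx)+b_k^*\sin(2\pi kx)-V(x)\right)^{1/\alpha}},\qquad \overline{H}=a_0^*-p_0,$$ where $(a_0^*,\dots,a_n^*,b_1^*,\dots,b_n^* )\in\mathcal{C}$ is the unique solution in $\mathcal{C}$ of the system $$\frac{\partial\Phi_\alpha}{\partial a_0}=1,\quad \frac{\partial\Phi_\alpha}{\partial a_k}=\frac{p_k a_k+q_k b_k}{p_k^2+q_k^2},\quad \frac{\partial\Phi_\alpha}{\partial b_k}=\frac{p_k b_k-q_k a_k}{p_k^2+q_k^2},\quad 1\le k\le n. \tag{S}$$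
   Context: $\mathbb{T}=\mathbb{R}/\mathbb{Z}$ (functions on $\mathbb{T}$ are 1-periodic functions on $\mathbb{R}$). Problem (P): given $0<\alpha\le2$, $j\ne0$, $V,G\in C^2(\mathbb{T})$, find $(m,\overline{H})\in C(\mathbb{T})\times\mathbb{R}$ with $m>0$ on $\mathbb{T}$, $\int_{\mathbb{T}}m=1$, and $\frac{j^2}{2m(x)^\alpha}+V(x)=\int_{\mathbb{T}}G(x-y)m(y)\,dy+\overline{H}$ for all $x\in\mathbb{T}$. Condition (M): $\int_{\mathbb{T}^2}G(x-y)f(x)f(y)\,dx\,dy\ge0$ for all $f\in C(\mathbb{T})$. Condition (W): $\int_{\mathbb{T}}G(y)\,dy>0$. Set $c_j=(j^2/2)^{1/\alpha}$ and let $\phi_\alpha:(0,\infty)\to\mathbb{R}$ be $\phi_\alpha(t)=\frac{c_j\alpha}{\alpha-1}t^{(\alpha-1)/\alpha}$ if $\alpha\ne1$ and $\phi_\alpha(t)=c_j\ln t$ if $\alpha=1$ (so $\phi_\alpha'(t)=c_j t^{-1/\alpha}$). $\mathcal{C}\subset\mathbb{R}^{2n+1}$ is the set of $(a_0,\dots,a_n,b_1,\dots,b_n)$ with $a_0+\sum_{k=1}^n(a_k\cos(2\pi kx)+b_k\sin(2\pi kx))-V(x)>0$ for all $x\in\mathbb{T}$, and for such points $\Phi_\alpha(a_0,\dots,a_n,b_1,\dots,b_n)=\int_{\mathbb{T}}\phi_\alpha\big(a_0+\sum_{k=1}^n(a_k\cos(2\pi ky)+b_k\sin(2\pi ky))-V(y)\big)\,dy$.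 *)

theory Defs
  imports "HOL-Analysis.Analysis"
begin

text \<open>Functions on the torus T = R/Z are 1-periodic functions on R.\<close>

definition periodic1 :: "(real \<Rightarrow> real) \<Rightarrow> bool" where
  "periodic1 f \<longleftrightarrow> (\<forall>x. f (x + 1) = f x)"

definition C0_T :: "(real \<Rightarrow> real) \<Rightarrow> bool" where
  "C0_T f \<longleftrightarrow> periodic1 f \<and> continuous_on UNIV f"

definition C2_T :: "(real \<Rightarrow> real) \<Rightarrow> bool" where
  "C2_T V \<longleftrightarrow> periodic1 V \<and>
     (\<exists>V' V''. (\<forall>x. (V has_real_derivative V' x) (at x)) \<and>
               (\<forall>x. (V' has_real_derivative V'' x) (at x)) \<and>
               continuous_on UNIV V'')"

text \<open>Coefficient vectors in R^(2n+1) are represented by functions a, b :: nat => real,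
  of which only a 0..a n and b 1..b n are relevant.\<close>
definition trig :: "nat \<Rightarrow> (nat \<Rightarrow> real) \<Rightarrow> (nat \<Rightarrow> real) \<Rightarrow> real \<Rightarrow> real" where
  "trig n a b x = a 0 + (\<Sum>k=1..n. a k * cos (2 * pi * real k * x) + b k * sin (2 * pi * real k * x))"

definition solves_P :: "real \<Rightarrow> real \<Rightarrow> (real \<Rightarrow> real) \<Rightarrow> (real \<Rightarrow> real) \<Rightarrow>
    (real \<Rightarrow> real) \<Rightarrow> real \<Rightarrow> bool" where
  "solves_P \<alpha> j V G m H \<longleftrightarrow>
     C0_T m \<and> (\<forall>x. m x > 0) \<and> integral {0..1} m = 1 \<and>
     (\<forall>x. j\<^sup>2 / (2 * m x powr \<alpha>) + V x = integral {0..1} (\<lambda>y. G (x - y) * m y) + H)"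

definition cond_M :: "(real \<Rightarrow> real) \<Rightarrow> bool" where
  "cond_M G \<longleftrightarrow> (\<forall>f. C0_T f \<longrightarrow>
     integral {0..1} (\<lambda>x. integral {0..1} (\<lambda>y. G (x - y) * f x * f y)) \<ge> 0)"

definition cond_W :: "(real \<Rightarrow> real) \<Rightarrow> bool" where
  "cond_W G \<longleftrightarrow> integral {0..1} G > 0"

definition c_j :: "real \<Rightarrow> real \<Rightarrow> real" where
  "c_j \<alpha> j = (j\<^sup>2 / 2) powr (1 / \<alpha>)"

definition phi :: "real \<Rightarrow> real \<Rightarrow> real \<Rightarrow> real" where
  "phi \<alpha> j t = (if \<alpha> = 1 then c_j \<alpha> j * ln t
                 else c_j \<alpha> j * \<alpha> / (\<alpha> - 1) * t powr ((\<alpha> - 1) / \<alpha>))"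

definition in_C :: "nat \<Rightarrow> (real \<Rightarrow> real) \<Rightarrow> (nat \<Rightarrow> real) \<Rightarrow> (nat \<Rightarrow> real) \<Rightarrow> bool" where
  "in_C n V a b \<longleftrightarrow> (\<forall>x. trig n a b x - V x > 0)"

definition Phi :: "real \<Rightarrow> real \<Rightarrow> nat \<Rightarrow> (real \<Rightarrow> real) \<Rightarrow> (nat \<Rightarrow> real) \<Rightarrow> (nat \<Rightarrow> real) \<Rightarrow> real" where
  "Phi \<alpha> j n V a b = integral {0..1} (\<lambda>y. phi \<alpha> j (trig n a b y - V y))"

definition system_S :: "real \<Rightarrow> real \<Rightarrow> nat \<Rightarrow> (real \<Rightarrow> real) \<Rightarrow> (nat \<Rightarrow> real) \<Rightarrow> (nat \<Rightarrow> real)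
    \<Rightarrow> (nat \<Rightarrow> real) \<Rightarrow> (nat \<Rightarrow> real) \<Rightarrow> bool" where
  "system_S \<alpha> j n V p q a b \<longleftrightarrow>
     ((\<lambda>t. Phi \<alpha> j n V (a(0 := t)) b) has_real_derivative 1) (at (a 0)) \<and>
     (\<forall>k\<in>{1..n}.
        ((\<lambda>t. Phi \<alpha> j n V (a(k := t)) b) has_real_derivative
            ((p k * a k + q k * b k) / ((p k)\<^sup>2 + (q k)\<^sup>2))) (at (a k)) \<and>
        ((\<lambda>t. Phi \<alpha> j n V a (b(k := t))) has_real_derivative
            ((p k * b k - q k * a k) / ((p k)\<^sup>2 + (q k)\<^sup>2))) (at (b k)))"

end

theory Submission imports Defs "HOL-Homology.Brouwer_Degree" begin

lemma homot_canon:
  fixes h :: "real \<times> 'a::topological_space \<Rightarrow> 'b::topological_space"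
  assumes "continuous_on ({0..1} \<times> S) h" "h ` ({0..1} \<times> S) \<subseteq> T"
    "\<And>x. x \<in> S \<Longrightarrow> h (0, x) = f x" "\<And>x. x \<in> S \<Longrightarrow> h (1, x) = g x"
  shows "homotopic_with (\<lambda>x. True) (top_of_set S) (top_of_set T) f g"
  apply (subst homotopic_with, simp)
  apply (rule exI[of _ h])
  using assms by (simp add: subtopology_Times[symmetric] image_subset_iff_funcset[symmetric])

lemma cont_snd_coord[continuous_intros]: "continuous_on A (\<lambda>x::'a::topological_space \<times> (nat\<Rightarrow>real). snd x i)"
  by (rule continuous_on_compose2[OF continuous_on_product_coordinates continuous_on_snd]) auto

lemma nsphere_top: "nsphere p = top_of_set {x. (\<Sum>i\<le>p. x i ^ 2) = 1 \<and> (\<forall>i>p. x i = (0::real))}"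
  by (simp add: nsphere euclidean_product_topology)

lemma normalize_cont:
  "continuous_on {v::nat\<Rightarrow>real. (\<forall>i>p. v i = 0) \<and> v \<noteq> (\<lambda>i. 0)}
     (\<lambda>v i. v i / sqrt (\<Sum>j\<le>p. v j ^ 2))"
proof -
  have nz: "(\<Sum>j\<le>p. v j ^ 2) \<noteq> 0" if "(\<forall>i>p. v i = 0)" "v \<noteq> (\<lambda>i. 0)" for v :: "nat \<Rightarrow> real"
  proof
    assume "(\<Sum>j\<le>p. v j ^ 2) = 0"
    then have "\<forall>j\<le>p. v j = 0" by (simp add: sum_nonneg_eq_0_iff)
    with that show False by (metis not_le)
  qed
  show ?thesis
    apply (rule continuous_on_coordinatewise_then_product)
    apply (intro continuous_intros continuous_on_product_coordinates[THEN continuous_on_subset])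
    using nz by auto
qed

lemma normalize_in:
  fixes v :: "nat \<Rightarrow> real"
  assumes "\<forall>i>p. v i = 0" "v \<noteq> (\<lambda>i. 0)"
  shows "(\<Sum>i\<le>p. ((\<lambda>i. v i / sqrt (\<Sum>j\<le>p. v j ^ 2)) i) ^ 2) = 1 \<and> (\<forall>i>p. (\<lambda>i. v i / sqrt (\<Sum>j\<le>p. v j ^ 2)) i = 0)"
proof -
  have "(\<Sum>j\<le>p. v j ^ 2) \<noteq> 0"
  proof
    assume "(\<Sum>j\<le>p. v j ^ 2) = 0"
    then have "\<forall>j\<le>p. v j = 0" by (simp add: sum_nonneg_eq_0_iff)
    with assms show False by (metis not_le ext)
  qed
  moreover have "(\<Sum>j\<le>p. v j ^ 2) \<ge> 0" by (simp add: sum_nonneg)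
  ultimately show ?thesis using assms
    by (simp add: power_divide flip: sum_divide_distrib)
qed

lemma brouwer_nat:
  fixes f :: "(nat\<Rightarrow>real) \<Rightarrow> (nat\<Rightarrow>real)"
  assumes cont: "continuous_on UNIV f" and supp: "\<And>u i. N \<le> i \<Longrightarrow> f u i = 0"
    and bnd: "\<And>u. (\<Sum>i<N. (f u i)\<^sup>2) \<le> 1"
  shows "\<exists>u. f u = u"
proof (rule ccontr)
  assume nofix: "\<not> (\<exists>u. f u = u)"
  show False
  proof (cases N)
    case 0
    then have "f (\<lambda>i. 0) = (\<lambda>i. 0)" using supp by auto
    then show False using nofix by blast
  next
    case (Suc p)
    define S where "S = {x::nat\<Rightarrow>real. (\<Sum>i\<le>p. x i ^ 2) = 1 \<and> (\<forall>i>p. x i = 0)}"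
    define Z where "Z = {v::nat\<Rightarrow>real. (\<forall>i>p. v i = 0) \<and> v \<noteq> (\<lambda>i. 0)}"
    define g where "g = (\<lambda>(v::nat\<Rightarrow>real) i. v i / sqrt (\<Sum>j\<le>p. v j ^ 2))"
    have gcont: "continuous_on Z g" unfolding g_def Z_def by (rule normalize_cont)
    have gS: "g v \<in> S" if "v \<in> Z" for v using normalize_in[of p v] that unfolding S_def Z_def g_def by auto
    have gid: "g y = y" if "y \<in> S" for y using that unfolding S_def g_def by simp
    have suppS: "f u i = 0" if "i > p" for u i using supp[of i u] Suc that by simp
    have bndS: "(\<Sum>i\<le>p. (f u i)\<^sup>2) \<le> 1" for u using bnd[of u] Suc by (simp add: lessThan_Suc_atMost)
    define h1 where "h1 = (\<lambda>(s::real, y::nat\<Rightarrow>real) i. y i - s * f y i)"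
    define h2 where "h2 = (\<lambda>(s::real, y::nat\<Rightarrow>real) i. (1 - s) * y i - f (\<lambda>i. (1 - s) * y i) i)"
    have fci: "continuous_on UNIV (\<lambda>u. f u i)" for i by (rule continuous_on_product_then_coordinatewise[OF cont])
    have fc: "continuous_on A (\<lambda>x. f (k x) i)" if "continuous_on A k" for A :: "(real \<times> (nat \<Rightarrow> real)) set" and k i
      using continuous_on_compose2[OF fci that] by simp
    have h1c: "continuous_on ({0..1} \<times> S) h1"
      unfolding h1_def
      apply (rule continuous_on_coordinatewise_then_product)
      apply (simp add: case_prod_unfold)
      by (intro continuous_intros fc)
    have h2c: "continuous_on ({0..1} \<times> S) h2"
    proof -
      have k: "continuous_on ({0..1} \<times> S) (\<lambda>x::real\<times>(nat\<Rightarrow>real). \<lambda>i. (1 - fst x) * snd x i)"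
        apply (rule continuous_on_coordinatewise_then_product)
        by (intro continuous_intros)
      show ?thesis
        unfolding h2_def
        apply (rule continuous_on_coordinatewise_then_product)
        apply (simp add: case_prod_unfold)
        by (intro continuous_intros fc k)
    qed
    have h1Z: "h1 x \<in> Z" if xin: "x \<in> {0..1} \<times> S" for x
    proof -
      obtain s y where x: "x = (s, y)" "0 \<le> s" "s \<le> 1" "y \<in> S" using xin by (cases x) auto
      have "(\<forall>i>p. h1 x i = 0)" using x suppS unfolding h1_def S_def by auto
      moreover have "h1 x \<noteq> (\<lambda>i. 0)"
      proof
        assume "h1 x = (\<lambda>i. 0)"
        then have yy: "\<And>i. y i = s * f y i" unfolding h1_def x by (metis (mono_tags) case_prod_conv eq_iff_diff_eq_0)
        show False
        proof (cases "s = 1")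
          case True then show ?thesis using yy nofix by (metis ext mult_1)
        next
          case False
          then have s1: "s < 1" using x by simp
          have "1 = (\<Sum>i\<le>p. (y i)\<^sup>2)" using x unfolding S_def by simp
          also have "\<dots> = s\<^sup>2 * (\<Sum>i\<le>p. (f y i)\<^sup>2)" by (simp add: yy power_mult_distrib sum_distrib_left)
          also have "\<dots> \<le> s\<^sup>2 * 1" by (rule mult_left_mono[OF bndS]) simp
          also have "\<dots> < 1" using s1 x by (simp add: power_less_one_iff abs_square_less_1)
          finally show False by simp
        qed
      qed
      ultimately show ?thesis unfolding Z_def by simp
    qed
    have h2Z: "h2 x \<in> Z" if xin: "x \<in> {0..1} \<times> S" for x
    proof -
      obtain s y where x: "x = (s, y)" "0 \<le> s" "s \<le> 1" "y \<in> S" using xin by (cases x) auto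
      have "(\<forall>i>p. h2 x i = 0)"
      proof (intro allI impI)
        fix i assume pi: "p < i"
        then have "y i = 0" using x(4) unfolding S_def by auto
        moreover have "f (\<lambda>i. (1 - s) * y i) i = 0" using suppS[OF pi] .
        ultimately show "h2 x i = 0" unfolding h2_def x by simp
      qed
      moreover have "h2 x \<noteq> (\<lambda>i. 0)"
      proof
        assume "h2 x = (\<lambda>i. 0)"
        then have "\<And>i. h2 x i = 0" by simp
        moreover have "\<And>i. h2 x i = (1 - s) * y i - f (\<lambda>i. (1 - s) * y i) i" unfolding h2_def x(1) by simp
        ultimately have "f (\<lambda>i. (1 - s) * y i) = (\<lambda>i. (1 - s) * y i)"
          by (metis (no_types, lifting) eq_iff_diff_eq_0 ext)
        then show False using nofix by blast
      qed
      ultimately show ?thesis unfolding Z_def by simp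
    qed
    have H1: "homotopic_with (\<lambda>x. True) (top_of_set S) (top_of_set S) id (\<lambda>y. g (h1 (1, y)))"
    proof (rule homot_canon[where h="g \<circ> h1"])
      show "continuous_on ({0..1} \<times> S) (g \<circ> h1)"
        by (rule continuous_on_compose[OF h1c continuous_on_subset[OF gcont]]) (use h1Z in auto)
      show "(g \<circ> h1) ` ({0..1} \<times> S) \<subseteq> S" using h1Z gS by auto
      show "(g \<circ> h1) (0, x) = id x" if "x \<in> S" for x using gid[OF that] unfolding h1_def by simp
    qed simp
    have H2: "homotopic_with (\<lambda>x. True) (top_of_set S) (top_of_set S) (\<lambda>y. g (h1 (1, y))) (\<lambda>y. g (h2 (1, y)))"
    proof (rule homot_canon[where h="g \<circ> h2"])
      show "continuous_on ({0..1} \<times> S) (g \<circ> h2)"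
        by (rule continuous_on_compose[OF h2c continuous_on_subset[OF gcont]]) (use h2Z in auto)
      show "(g \<circ> h2) ` ({0..1} \<times> S) \<subseteq> S" using h2Z gS by auto
      show "(g \<circ> h2) (0, x) = g (h1 (1, x))" if "x \<in> S" for x unfolding h1_def h2_def by simp
    qed simp
    have c: "(\<lambda>y. g (h2 (1, y))) = (\<lambda>y. g (\<lambda>i. - f (\<lambda>i. 0) i))" unfolding h2_def by simp
    have "contractible_space (top_of_set S)"
      unfolding contractible_space_def using homotopic_with_trans[OF H1 H2] c by metis
    then show False using non_contractible_space_nsphere[of p] nsphere_top[of p] unfolding S_def by simp
  qed
qed



section \<open>Periodicity\<close>

lemma periodic1_nat: assumes "periodic1 f" shows "f (x + real m) = f x"
proof (induction m)
  case (Suc m)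
  have "f (x + real (Suc m)) = f ((x + real m) + 1)" by (simp add: algebra_simps)
  also have "\<dots> = f (x + real m)" using assms unfolding periodic1_def by blast
  finally show ?case using Suc by simp
qed simp

lemma periodic1_int: assumes "periodic1 f" shows "f (x + real_of_int k) = f x"
proof (cases "k \<ge> 0")
  case True
  then have "real_of_int k = real (nat k)" by simp
  then show ?thesis using periodic1_nat[OF assms, of x "nat k"] by metis
next
  case False
  define m where "m = nat (- k)"
  have "x = (x + real_of_int k) + real m" using False unfolding m_def by simp
  then have "f x = f ((x + real_of_int k) + real m)" by metis
  also have "\<dots> = f (x + real_of_int k)" by (rule periodic1_nat[OF assms])
  finally show ?thesis by simp
qed

lemma periodic1_frac: assumes "periodic1 f" shows "f x = f (x - real_of_int \<lfloor>x\<rfloor>)"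
  using periodic1_int[OF assms, of "x - real_of_int \<lfloor>x\<rfloor>" "\<lfloor>x\<rfloor>"] by (simp only: diff_add_cancel)

lemma frac_in01: "x - real_of_int \<lfloor>x\<rfloor> \<in> {0..1}"
proof -
  have "real_of_int \<lfloor>x\<rfloor> \<le> x" by (rule of_int_floor_le)
  moreover have "x < real_of_int \<lfloor>x\<rfloor> + 1" by (rule real_of_int_floor_add_one_gt)
  ultimately show ?thesis by (simp only: atLeastAtMost_iff) linarith
qed

lemma periodic1_reduce: assumes "periodic1 f" shows "\<exists>y\<in>{0..1}. f x = f y"
  using periodic1_frac[OF assms] frac_in01 by blast

lemma periodic_min:
  fixes g :: "real \<Rightarrow> real"
  assumes "periodic1 g" "continuous_on {0..1} g"
  shows "\<exists>x0\<in>{0..1}. \<forall>x. g x0 \<le> g x"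
proof -
  obtain x0 where x0: "x0 \<in> {0..1}" "\<forall>y\<in>{0..1}. g x0 \<le> g y"
    using continuous_attains_inf[of "{0..1::real}" g] assms by auto
  show ?thesis using x0 periodic1_reduce[OF assms(1)] by metis
qed

lemma periodic_max:
  fixes g :: "real \<Rightarrow> real"
  assumes "periodic1 g" "continuous_on {0..1} g"
  shows "\<exists>x0\<in>{0..1}. \<forall>x. g x \<le> g x0"
proof -
  obtain x0 where x0: "x0 \<in> {0..1}" "\<forall>y\<in>{0..1}. g y \<le> g x0"
    using continuous_attains_sup[of "{0..1::real}" g] assms by auto
  show ?thesis using x0 periodic1_reduce[OF assms(1)] by metis
qed

lemma shift_eq: "y + 2 * pi * real (Suc k) = (y + 2 * pi * real k) + 2 * pi"
  by (simp add: algebra_simps)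

lemma cos_shift_nat: "cos (y + 2 * pi * real k) = cos y"
proof (induction k)
  case (Suc k) then show ?case by (simp only: shift_eq cos_periodic)
qed simp

lemma sin_shift_nat: "sin (y + 2 * pi * real k) = sin y"
proof (induction k)
  case (Suc k) then show ?case by (simp only: shift_eq sin_periodic)
qed simp

lemma trig_periodic: "periodic1 (trig n a b)"
  unfolding periodic1_def trig_def
proof (intro allI)
  fix x
  have "2 * pi * real k * (x + 1) = 2 * pi * real k * x + 2 * pi * real k" for k by (simp add: algebra_simps)
  then show "a 0 + (\<Sum>k = 1..n. a k * cos (2 * pi * real k * (x + 1)) + b k * sin (2 * pi * real k * (x + 1))) =
         a 0 + (\<Sum>k = 1..n. a k * cos (2 * pi * real k * x) + b k * sin (2 * pi * real k * x))"
    by (simp add: cos_shift_nat sin_shift_nat)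
qed

lemma trig_cont: "continuous_on S (trig n a b)"
  unfolding trig_def by (intro continuous_intros)

lemma trig_upd_a:
  assumes "k \<le> n"
  shows "trig n (a(k := t)) b y = trig n a b y + (t - a k) * cos (2 * pi * real k * y)"
proof (cases "k = 0")
  case True
  have "(\<Sum>i = 1..n. (a(k := t)) i * cos (2 * pi * real i * y) + b i * sin (2 * pi * real i * y))
     = (\<Sum>i = 1..n. a i * cos (2 * pi * real i * y) + b i * sin (2 * pi * real i * y))"
    by (rule sum.cong) (use True in auto)
  then show ?thesis using True unfolding trig_def by simp
next
  case False
  have "(\<Sum>i = 1..n. (a(k := t)) i * cos (2 * pi * real i * y) + b i * sin (2 * pi * real i * y))
     = (\<Sum>i = 1..n. (a i * cos (2 * pi * real i * y) + b i * sin (2 * pi * real i * y))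
        + (if i = k then (t - a k) * cos (2 * pi * real k * y) else 0))"
    by (rule sum.cong) (auto simp: algebra_simps)
  also have "\<dots> = (\<Sum>i = 1..n. a i * cos (2 * pi * real i * y) + b i * sin (2 * pi * real i * y))
        + (t - a k) * cos (2 * pi * real k * y)"
    using False assms by (simp add: sum.distrib)
  finally show ?thesis using False unfolding trig_def by simp
qed

lemma trig_upd_b:
  assumes "k \<in> {1..n}"
  shows "trig n a (b(k := t)) y = trig n a b y + (t - b k) * sin (2 * pi * real k * y)"
proof -
  have "(\<Sum>i = 1..n. a i * cos (2 * pi * real i * y) + (b(k := t)) i * sin (2 * pi * real i * y))
     = (\<Sum>i = 1..n. (a i * cos (2 * pi * real i * y) + b i * sin (2 * pi * real i * y))
        + (if i = k then (t - b k) * sin (2 * pi * real k * y) else 0))"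
    by (rule sum.cong) (auto simp: algebra_simps)
  also have "\<dots> = (\<Sum>i = 1..n. a i * cos (2 * pi * real i * y) + b i * sin (2 * pi * real i * y))
        + (t - b k) * sin (2 * pi * real k * y)"
    using assms by (simp add: sum.distrib)
  finally show ?thesis unfolding trig_def by simp
qed

lemma cj_pos: "j \<noteq> 0 \<Longrightarrow> c_j \<alpha> j > 0"
  unfolding c_j_def by simp

lemma cj_powr: "c_j \<alpha> j powr \<alpha> = j\<^sup>2 / 2" if "\<alpha> > 0"
  unfolding c_j_def using that by (simp add: powr_powr)

lemma m_inv:
  assumes "\<alpha> > 0" "j \<noteq> 0" "t > 0"
  shows "j\<^sup>2 / (2 * (c_j \<alpha> j / t powr (1 / \<alpha>)) powr \<alpha>) = t"
proof -
  have "(c_j \<alpha> j / t powr (1 / \<alpha>)) powr \<alpha> = c_j \<alpha> j powr \<alpha> / (t powr (1 / \<alpha>)) powr \<alpha>"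
    by (rule powr_divide)
  also have "(t powr (1 / \<alpha>)) powr \<alpha> = t" using assms by (simp add: powr_powr)
  also have "c_j \<alpha> j powr \<alpha> = j\<^sup>2 / 2" using assms(1) by (rule cj_powr)
  finally have e: "(c_j \<alpha> j / t powr (1 / \<alpha>)) powr \<alpha> = j\<^sup>2 / 2 / t" .
  show ?thesis unfolding e using assms by simp
qed


section \<open>Convolution expansion\<close>

lemma trig_diff_expand:
  "trig n p q (x - y) * my = p 0 * my + (\<Sum>k=1..n.
      cos (2 * pi * real k * x) * (p k * (my * cos (2 * pi * real k * y)) - q k * (my * sin (2 * pi * real k * y)))
    + sin (2 * pi * real k * x) * (p k * (my * sin (2 * pi * real k * y)) + q k * (my * cos (2 * pi * real k * y))))"
proof -
  have e: "2 * pi * real k * (x - y) = 2 * pi * real k * x - 2 * pi * real k * y" for k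
    by (simp add: algebra_simps)
  have "trig n p q (x - y) * my = p 0 * my + (\<Sum>k=1..n. (p k * cos (2 * pi * real k * (x - y)) + q k * sin (2 * pi * real k * (x - y))) * my)"
    unfolding trig_def by (simp add: algebra_simps sum_distrib_right sum_distrib_left)
  also have "\<dots> = p 0 * my + (\<Sum>k=1..n.
      cos (2 * pi * real k * x) * (p k * (my * cos (2 * pi * real k * y)) - q k * (my * sin (2 * pi * real k * y)))
    + sin (2 * pi * real k * x) * (p k * (my * sin (2 * pi * real k * y)) + q k * (my * cos (2 * pi * real k * y))))"
    by (rule arg_cong[where f="\<lambda>z. p 0 * my + z"], rule sum.cong, simp)
       (simp only: e cos_diff sin_diff, simp add: algebra_simps)
  finally show ?thesis .
qed

lemma conv_expand:
  assumes m: "continuous_on {0..1} m"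
  shows "integral {0..1} (\<lambda>y. trig n p q (x - y) * m y) = p 0 * integral {0..1} m + (\<Sum>k=1..n.
      cos (2 * pi * real k * x) * (p k * integral {0..1} (\<lambda>y. m y * cos (2 * pi * real k * y)) - q k * integral {0..1} (\<lambda>y. m y * sin (2 * pi * real k * y)))
    + sin (2 * pi * real k * x) * (p k * integral {0..1} (\<lambda>y. m y * sin (2 * pi * real k * y)) + q k * integral {0..1} (\<lambda>y. m y * cos (2 * pi * real k * y))))"
proof -
  have ic: "((\<lambda>y. m y * cos (2 * pi * real k * y)) has_integral integral {0..1} (\<lambda>y. m y * cos (2 * pi * real k * y))) {0..1}" for k
    by (rule integrable_integral, rule integrable_continuous_interval, intro continuous_intros m)
  have isn: "((\<lambda>y. m y * sin (2 * pi * real k * y)) has_integral integral {0..1} (\<lambda>y. m y * sin (2 * pi * real k * y))) {0..1}" for k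
    by (rule integrable_integral, rule integrable_continuous_interval, intro continuous_intros m)
  have i0: "(m has_integral integral {0..1} m) {0..1}"
    by (rule integrable_integral, rule integrable_continuous_interval, rule m)
  have "((\<lambda>y. p 0 * m y + (\<Sum>k=1..n.
      cos (2 * pi * real k * x) * (p k * (m y * cos (2 * pi * real k * y)) - q k * (m y * sin (2 * pi * real k * y)))
    + sin (2 * pi * real k * x) * (p k * (m y * sin (2 * pi * real k * y)) + q k * (m y * cos (2 * pi * real k * y)))))
    has_integral (p 0 * integral {0..1} m + (\<Sum>k=1..n.
      cos (2 * pi * real k * x) * (p k * integral {0..1} (\<lambda>y. m y * cos (2 * pi * real k * y)) - q k * integral {0..1} (\<lambda>y. m y * sin (2 * pi * real k * y)))
    + sin (2 * pi * real k * x) * (p k * integral {0..1} (\<lambda>y. m y * sin (2 * pi * real k * y)) + q k * integral {0..1} (\<lambda>y. m y * cos (2 * pi * real k * y)))))) {0..1}"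
    by (intro has_integral_add has_integral_sum finite_atLeastAtMost has_integral_mult_right has_integral_diff ic isn i0)
  then show ?thesis
    by (subst trig_diff_expand) (rule integral_unique)
qed


section \<open>Derivative of Phi\<close>

lemma phi_deriv:
  assumes "\<alpha> > 0" "s > 0"
  shows "(phi \<alpha> j has_real_derivative c_j \<alpha> j * s powr (- 1 / \<alpha>)) (at s)"
proof (cases "\<alpha> = 1")
  case True
  have e: "phi \<alpha> j = (\<lambda>t. c_j \<alpha> j * ln t)" using True unfolding phi_def by auto
  have "((\<lambda>t. c_j \<alpha> j * ln t) has_real_derivative c_j \<alpha> j * (1 / s)) (at s)"
    using assms by (auto intro!: derivative_eq_intros)
  moreover have "s powr (- 1 / \<alpha>) = 1 / s" using True assms by (simp add: powr_minus_divide)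
  ultimately show ?thesis unfolding e by simp
next
  case False
  have e: "phi \<alpha> j = (\<lambda>t. c_j \<alpha> j * \<alpha> / (\<alpha> - 1) * t powr ((\<alpha> - 1) / \<alpha>))" using False unfolding phi_def by auto
  have "((\<lambda>t. c_j \<alpha> j * \<alpha> / (\<alpha> - 1) * t powr ((\<alpha> - 1) / \<alpha>)) has_real_derivative
      c_j \<alpha> j * \<alpha> / (\<alpha> - 1) * (((\<alpha> - 1) / \<alpha>) * s powr ((\<alpha> - 1) / \<alpha> - 1))) (at s)"
    by (intro DERIV_cmult has_real_derivative_powr assms)
  moreover have "(\<alpha> - 1) / \<alpha> - 1 = - 1 / \<alpha>" using assms by (simp add: field_simps)
  moreover have "c_j \<alpha> j * \<alpha> / (\<alpha> - 1) * ((\<alpha> - 1) / \<alpha>) = c_j \<alpha> j" using assms False by (simp add: field_simps)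
  ultimately show ?thesis unfolding e by (metis (no_types, lifting) mult.assoc)
qed

lemma phi_cont: "\<alpha> > 0 \<Longrightarrow> continuous_on {0<..} (phi \<alpha> j)"
  by (rule continuous_at_imp_continuous_on) (use phi_deriv[THEN DERIV_isCont] in auto)

lemma deriv_param:
  fixes w e :: "real \<Rightarrow> real"
  assumes a: "\<alpha> > 0" and cw: "continuous_on {0..1} w" and ce: "continuous_on {0..1} e"
    and wpos: "\<And>x. x \<in> {0..1} \<Longrightarrow> w x > 0" and eb: "\<And>x. x \<in> {0..1} \<Longrightarrow> \<bar>e x\<bar> \<le> 1"
  shows "((\<lambda>t. integral {0..1} (\<lambda>x. phi \<alpha> j (w x + (t - t0) * e x))) has_real_derivative
           integral {0..1} (\<lambda>x. c_j \<alpha> j / w x powr (1 / \<alpha>) * e x)) (at t0)"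
proof -
  obtain x1 where x1: "x1 \<in> {0..1}" "\<And>y. y \<in> {0..1} \<Longrightarrow> w x1 \<le> w y"
    using continuous_attains_inf[of "{0..1::real}" w] cw by auto
  define \<mu> where "\<mu> = w x1"
  have mu: "\<mu> > 0" using wpos x1 unfolding \<mu>_def by auto
  define U where "U = {t0 - \<mu>/2 <..< t0 + \<mu>/2}"
  have pos: "w x + (t - t0) * e x \<ge> \<mu>/2" if "t \<in> U" "x \<in> {0..1}" for t x
  proof -
    have "\<bar>(t - t0) * e x\<bar> \<le> \<bar>t - t0\<bar> * 1" unfolding abs_mult
      by (rule mult_left_mono[OF eb[OF that(2)]]) simp
    also have "\<dots> \<le> \<mu>/2" using that(1) unfolding U_def by (auto simp: abs_if)
    finally show ?thesis using x1(2)[OF that(2)] unfolding \<mu>_def by linarith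
  qed
  have t0U: "t0 \<in> U" "open U" "convex U" using mu unfolding U_def by auto
  define fx where "fx = (\<lambda>t x. c_j \<alpha> j * (w x + (t - t0) * e x) powr (- 1 / \<alpha>) * e x)"
  have "((\<lambda>t. integral (cbox 0 1) (\<lambda>x. phi \<alpha> j (w x + (t - t0) * e x))) has_field_derivative
          integral (cbox 0 1) (fx t0)) (at t0 within U)"
  proof (rule leibniz_rule_field_derivative[OF _ _ _ t0U(1,3)])
    fix t x assume tx: "t \<in> U" "x \<in> cbox (0::real) 1"
    have "((\<lambda>t. phi \<alpha> j (w x + (t - t0) * e x)) has_real_derivative
        c_j \<alpha> j * (w x + (t - t0) * e x) powr (- 1 / \<alpha>) * e x) (at t)"
    proof -
      have inner: "((\<lambda>t. w x + (t - t0) * e x) has_real_derivative e x) (at t)"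
        by (auto intro!: derivative_eq_intros)
      have "w x + (t - t0) * e x > 0" using pos[of t x] tx mu by simp
      from DERIV_chain2[OF phi_deriv[OF a this] inner] show ?thesis .
    qed
    then show "((\<lambda>t. phi \<alpha> j (w x + (t - t0) * e x)) has_field_derivative fx t x) (at t within U)"
      unfolding fx_def by (rule has_field_derivative_at_within)
  next
    fix t assume t: "t \<in> U"
    have "continuous_on {0..1} (\<lambda>x. phi \<alpha> j (w x + (t - t0) * e x))"
      apply (rule continuous_on_compose2[OF phi_cont[OF a]])
       apply (intro continuous_intros cw ce)
      using pos[OF t] mu by fastforce
    then show "(\<lambda>x. phi \<alpha> j (w x + (t - t0) * e x)) integrable_on cbox 0 1"
      by (simp add: integrable_continuous_interval)
  next
    have cws: "continuous_on (U \<times> {0..1}) (\<lambda>z. w (snd z))"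
      by (rule continuous_on_compose2[OF cw continuous_on_snd]) auto
    have ces: "continuous_on (U \<times> {0..1}) (\<lambda>z. e (snd z))"
      by (rule continuous_on_compose2[OF ce continuous_on_snd]) auto
    show "continuous_on (U \<times> cbox 0 1) (\<lambda>(t, x). fx t x)"
      unfolding fx_def case_prod_unfold box_real
      apply (intro continuous_intros cws ces)
      using pos mu by fastforce
  qed
  then have "((\<lambda>t. integral {0..1} (\<lambda>x. phi \<alpha> j (w x + (t - t0) * e x))) has_real_derivative
          integral {0..1} (fx t0)) (at t0)"
    using at_within_open[OF t0U(1,2)] by simp
  moreover have "integral {0..1} (fx t0) = integral {0..1} (\<lambda>x. c_j \<alpha> j / w x powr (1 / \<alpha>) * e x)"
    unfolding fx_def by (rule integral_cong) (simp add: powr_minus_divide)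
  ultimately show ?thesis by simp
qed


lemma trig_cont_shift: "continuous_on S (\<lambda>y. trig n a b (x - y))"
  by (rule continuous_on_compose2[OF trig_cont[of UNIV]]) (intro continuous_intros, auto)

lemma lin_div: "(P::real) * (X / D) - Q * (Y / D) = (P * X - Q * Y) / D"
  by (simp add: diff_divide_distrib)
lemma lin_div2: "(P::real) * (X / D) + Q * (Y / D) = (P * X + Q * Y) / D"
  by (simp add: add_divide_distrib)
lemma rot_inv:
  fixes P Q A B :: real assumes nz: "P\<^sup>2 + Q\<^sup>2 \<noteq> 0"
  shows "P * ((P*A + Q*B)/(P\<^sup>2+Q\<^sup>2)) - Q * ((P*B - Q*A)/(P\<^sup>2+Q\<^sup>2)) = A"
    and "P * ((P*B - Q*A)/(P\<^sup>2+Q\<^sup>2)) + Q * ((P*A + Q*B)/(P\<^sup>2+Q\<^sup>2)) = B"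
proof -
  have "P * ((P*A + Q*B)/(P\<^sup>2+Q\<^sup>2)) - Q * ((P*B - Q*A)/(P\<^sup>2+Q\<^sup>2)) = (P * (P*A + Q*B) - Q * (P*B - Q*A))/(P\<^sup>2+Q\<^sup>2)"
    by (rule lin_div)
  also have "P * (P*A + Q*B) - Q * (P*B - Q*A) = A * (P\<^sup>2+Q\<^sup>2)"
    by (simp add: algebra_simps power2_eq_square)
  finally show "P * ((P*A + Q*B)/(P\<^sup>2+Q\<^sup>2)) - Q * ((P*B - Q*A)/(P\<^sup>2+Q\<^sup>2)) = A" using nz by (metis nonzero_mult_div_cancel_right)
  have "P * ((P*B - Q*A)/(P\<^sup>2+Q\<^sup>2)) + Q * ((P*A + Q*B)/(P\<^sup>2+Q\<^sup>2)) = (P * (P*B - Q*A) + Q * (P*A + Q*B))/(P\<^sup>2+Q\<^sup>2)"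
    by (rule lin_div2)
  also have "P * (P*B - Q*A) + Q * (P*A + Q*B) = B * (P\<^sup>2+Q\<^sup>2)"
    by (simp add: algebra_simps power2_eq_square)
  finally show "P * ((P*B - Q*A)/(P\<^sup>2+Q\<^sup>2)) + Q * ((P*A + Q*B)/(P\<^sup>2+Q\<^sup>2)) = B" using nz by (metis nonzero_mult_div_cancel_right)
qed

lemma integrable01: "continuous_on {0..1} f \<Longrightarrow> (f::real\<Rightarrow>real) integrable_on {0..1}"
  by (rule integrable_continuous_interval)

definition T1 :: "nat \<Rightarrow> (nat \<Rightarrow> real) \<Rightarrow> (nat \<Rightarrow> real) \<Rightarrow> real \<Rightarrow> real" where
  "T1 n a b x = (\<Sum>k=1..n. b k * (2 * pi * real k) * cos (2 * pi * real k * x) - a k * (2 * pi * real k) * sin (2 * pi * real k * x))"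
definition T2 :: "nat \<Rightarrow> (nat \<Rightarrow> real) \<Rightarrow> (nat \<Rightarrow> real) \<Rightarrow> real \<Rightarrow> real" where
  "T2 n a b x = (\<Sum>k=1..n. - (b k * (2 * pi * real k) * (2 * pi * real k) * sin (2 * pi * real k * x)) - a k * (2 * pi * real k) * (2 * pi * real k) * cos (2 * pi * real k * x))"

lemma trig_d1: "(trig n a b has_real_derivative T1 n a b x) (at x)"
proof -
  have "((\<lambda>x. a 0 + (\<Sum>k=1..n. a k * cos (2 * pi * real k * x) + b k * sin (2 * pi * real k * x))) has_real_derivative
     0 + (\<Sum>k=1..n. a k * (- sin (2 * pi * real k * x) * (2 * pi * real k)) + b k * (cos (2 * pi * real k * x) * (2 * pi * real k)))) (at x)"
    by (intro derivative_intros DERIV_sum DERIV_cmult DERIV_add) (auto intro!: derivative_eq_intros)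
  then show ?thesis unfolding T1_def trig_def[abs_def]
    by (rule DERIV_cong) (subst add_0_left, rule sum.cong[OF refl], simp add: algebra_simps)
qed

lemma trig_d2: "(T1 n a b has_real_derivative T2 n a b x) (at x)"
proof -
  have "((\<lambda>x. (\<Sum>k=1..n. b k * (2 * pi * real k) * cos (2 * pi * real k * x) - a k * (2 * pi * real k) * sin (2 * pi * real k * x))) has_real_derivative
     (\<Sum>k=1..n. b k * (2 * pi * real k) * (- sin (2 * pi * real k * x) * (2 * pi * real k)) - a k * (2 * pi * real k) * (cos (2 * pi * real k * x) * (2 * pi * real k)))) (at x)"
    by (intro DERIV_sum DERIV_cmult DERIV_diff) (auto intro!: derivative_eq_intros)
  then show ?thesis unfolding T1_def[abs_def] T2_def
    by (rule DERIV_cong) (rule sum.cong[OF refl], simp add: algebra_simps)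
qed

lemma T2_cont: "continuous_on S (T2 n a b)"
  unfolding T2_def by (intro continuous_intros)

lemma mvt_bound:
  fixes f f' :: "real \<Rightarrow> real"
  assumes d: "\<And>y. (f has_real_derivative f' y) (at y)"
  shows "\<exists>z. \<bar>z - a\<bar> \<le> \<bar>x - a\<bar> \<and> f x - f a = (x - a) * f' z"
proof (cases "x = a")
  case True then show ?thesis by (intro exI[of _ a]) simp
next
  case False
  show ?thesis
  proof (cases "a < x")
    case True
    obtain z where "a < z" "z < x" "f x - f a = (x - a) * f' z" using MVT2[OF True, of f f'] d by blast
    then show ?thesis by (intro exI[of _ z]) auto
  next
    case False
    then have xa: "x < a" using \<open>x \<noteq> a\<close> by simp
    obtain z where "x < z" "z < a" "f a - f x = (a - x) * f' z" using MVT2[OF xa, of f f'] d by blast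
    then show ?thesis by (intro exI[of _ z]) (auto simp: algebra_simps)
  qed
qed

lemma quad_bound:
  fixes Y Y1 Y2 :: "real \<Rightarrow> real"
  assumes d1: "\<And>y. (Y has_real_derivative Y1 y) (at y)"
    and d2: "\<And>y. (Y1 has_real_derivative Y2 y) (at y)"
    and c2: "continuous_on UNIV Y2"
    and mn: "\<And>x. Y x0 \<le> Y x"
  shows "\<exists>K>0. \<forall>x. \<bar>x - x0\<bar> \<le> 1 \<longrightarrow> Y x - Y x0 \<le> K * (x - x0)\<^sup>2"
proof -
  have Y10: "Y1 x0 = 0"
    by (rule DERIV_local_min[OF d1, of 1]) (use mn in auto)
  have ca: "continuous_on {x0 - 1..x0 + 1} (\<lambda>y. \<bar>Y2 y\<bar>)"
    by (intro continuous_intros continuous_on_subset[OF c2]) auto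
  obtain z0 where z0: "z0 \<in> {x0 - 1..x0 + 1}" "\<And>y. y \<in> {x0 - 1..x0 + 1} \<Longrightarrow> \<bar>Y2 y\<bar> \<le> \<bar>Y2 z0\<bar>"
    using continuous_attains_sup[OF compact_Icc _ ca] by auto
  define K where "K = \<bar>Y2 z0\<bar> + 1"
  have Kp: "K > 0" unfolding K_def by simp
  have lip: "\<bar>Y1 y\<bar> \<le> K * \<bar>y - x0\<bar>" if y: "\<bar>y - x0\<bar> \<le> 1" for y
  proof -
    obtain z where z: "\<bar>z - x0\<bar> \<le> \<bar>y - x0\<bar>" "Y1 y - Y1 x0 = (y - x0) * Y2 z"
      using mvt_bound[OF d2, where a=x0 and x=y] by blast
    have "z \<in> {x0 - 1..x0 + 1}" using z(1) y by (auto simp: abs_le_iff)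
    then have "\<bar>Y2 z\<bar> \<le> K" using z0(2) unfolding K_def by force
    then have "\<bar>Y1 y\<bar> \<le> \<bar>y - x0\<bar> * K" using z(2) Y10 unfolding abs_mult[symmetric]
      by (simp add: abs_mult mult_left_mono)
    then show ?thesis by (simp add: mult.commute)
  qed
  show ?thesis
  proof (intro exI[of _ K] conjI Kp allI impI)
    fix x assume x: "\<bar>x - x0\<bar> \<le> 1"
    obtain z where z: "\<bar>z - x0\<bar> \<le> \<bar>x - x0\<bar>" "Y x - Y x0 = (x - x0) * Y1 z"
      using mvt_bound[OF d1, where a=x0 and x=x] by blast
    have "\<bar>Y1 z\<bar> \<le> K * \<bar>z - x0\<bar>" using lip z(1) x by simp
    also have "\<dots> \<le> K * \<bar>x - x0\<bar>" using z(1) Kp by (simp add: mult_left_mono)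
    finally have "\<bar>Y x - Y x0\<bar> \<le> \<bar>x - x0\<bar> * (K * \<bar>x - x0\<bar>)" using z(2)
      by (simp add: abs_mult mult_left_mono)
    also have "\<dots> = K * (x - x0)\<^sup>2" by (simp add: power2_eq_square abs_mult[symmetric] algebra_simps)
    finally show "Y x - Y x0 \<le> K * (x - x0)\<^sup>2" by simp
  qed
qed

lemma cont_prod:
  fixes g :: "(nat \<Rightarrow> real) \<Rightarrow> real"
  assumes H: "\<And>u0 \<epsilon>. \<epsilon> > 0 \<Longrightarrow> \<exists>\<delta>>0. \<forall>u. (\<forall>i<N. \<bar>u i - u0 i\<bar> < \<delta>) \<longrightarrow> \<bar>g u - g u0\<bar> < \<epsilon>"
  shows "continuous_on UNIV g"
  unfolding continuous_on_topological
proof (intro ballI allI impI)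
  fix u0 :: "nat \<Rightarrow> real" and S :: "real set"
  assume S: "open S" "g u0 \<in> S"
  obtain \<epsilon> where e: "\<epsilon> > 0" "ball (g u0) \<epsilon> \<subseteq> S" using S open_contains_ball by blast
  obtain \<delta> where d: "\<delta> > 0" "\<And>u. (\<forall>i<N. \<bar>u i - u0 i\<bar> < \<delta>) \<Longrightarrow> \<bar>g u - g u0\<bar> < \<epsilon>"
    using H[OF e(1)] by blast
  define A where "A = (\<Inter>i\<in>{..<N}. (\<lambda>u. u i) -` {u0 i - \<delta> <..< u0 i + \<delta>})"
  have "open A" unfolding A_def
    by (intro open_INT finite_lessThan ballI open_vimage open_greaterThanLessThan continuous_on_product_coordinates)
  moreover have "u0 \<in> A" unfolding A_def using d(1) by auto
  moreover have "g y \<in> S" if "y \<in> A" for y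
  proof -
    have "\<forall>i<N. \<bar>y i - u0 i\<bar> < \<delta>"
    proof (intro allI impI)
      fix i assume "i < N"
      then have "u0 i - \<delta> < y i \<and> y i < u0 i + \<delta>" using that unfolding A_def by auto
      then show "\<bar>y i - u0 i\<bar> < \<delta>" by (simp add: abs_less_iff)
    qed
    then have "\<bar>g y - g u0\<bar> < \<epsilon>" by (rule d(2))
    then show ?thesis using e(2) by (auto simp: dist_real_def abs_minus_commute)
  qed
  ultimately show "\<exists>A. open A \<and> u0 \<in> A \<and> (\<forall>y\<in>UNIV. y \<in> A \<longrightarrow> g y \<in> S)" by blast
qed


locale mfg =
  fixes \<alpha> j :: real and V V' V'' :: "real \<Rightarrow> real" and n :: nat and p q :: "nat \<Rightarrow> real"
  assumes a_pos: "0 < \<alpha>" and a_le2: "\<alpha> \<le> 2" and j_nz: "j \<noteq> 0"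
    and Vper: "periodic1 V"
    and dV: "\<And>x. (V has_real_derivative V' x) (at x)"
    and dV': "\<And>x. (V' has_real_derivative V'' x) (at x)"
    and cV'': "continuous_on UNIV V''"
    and pq: "\<forall>k\<in>{1..n}. (p k)\<^sup>2 + (q k)\<^sup>2 > 0"
    and condM: "cond_M (trig n p q)"
begin

abbreviation "c \<equiv> c_j \<alpha> j"
abbreviation "G \<equiv> trig n p q"

lemma c_pos: "c > 0" using cj_pos[OF j_nz] .

lemma Vcont: "continuous_on S V"
  by (rule continuous_at_imp_continuous_on) (use dV[THEN DERIV_isCont] in auto)

definition mf :: "(nat \<Rightarrow> real) \<Rightarrow> (nat \<Rightarrow> real) \<Rightarrow> real \<Rightarrow> real" where
  "mf a b x = c / (trig n a b x - V x) powr (1 / \<alpha>)"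

lemma wcont: "continuous_on S (\<lambda>x. trig n a b x - V x)"
  by (intro continuous_intros trig_cont Vcont)

lemma mf_pos: assumes "in_C n V a b" shows "mf a b x > 0"
proof -
  have "trig n a b x - V x > 0" using assms unfolding in_C_def by blast
  then show ?thesis unfolding mf_def using c_pos by simp
qed

lemma mf_cont: assumes "in_C n V a b" shows "continuous_on S (mf a b)"
proof -
  have 1: "\<forall>x\<in>S. trig n a b x - V x \<noteq> 0" using assms unfolding in_C_def by (metis less_irrefl)
  have 2: "\<forall>x\<in>S. (trig n a b x - V x) powr (1/\<alpha>) \<noteq> 0" using 1 by simp
  show ?thesis unfolding mf_def
    by (intro continuous_intros wcont 1 2)
qed

lemma mf_per: "periodic1 (mf a b)"
  using trig_periodic[of n a b] Vper unfolding periodic1_def mf_def by simp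

lemma mf_C0: "in_C n V a b \<Longrightarrow> C0_T (mf a b)"
  unfolding C0_T_def using mf_per mf_cont by blast

lemma S_to_P:
  assumes C: "in_C n V a b" and I1: "integral {0..1} (mf a b) = 1"
    and Ic: "\<And>k. k \<in> {1..n} \<Longrightarrow> integral {0..1} (\<lambda>y. mf a b y * cos (2 * pi * real k * y))
               = (p k * a k + q k * b k) / ((p k)\<^sup>2 + (q k)\<^sup>2)"
    and Is: "\<And>k. k \<in> {1..n} \<Longrightarrow> integral {0..1} (\<lambda>y. mf a b y * sin (2 * pi * real k * y))
               = (p k * b k - q k * a k) / ((p k)\<^sup>2 + (q k)\<^sup>2)"
  shows "solves_P \<alpha> j V G (mf a b) (a 0 - p 0)"
  unfolding solves_P_def
proof (intro conjI allI)
  show "C0_T (mf a b)" using mf_C0[OF C] .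
  show "0 < mf a b x" for x using mf_pos[OF C] .
  show "integral {0..1} (mf a b) = 1" by (rule I1)
  fix x
  have w: "trig n a b x - V x > 0" using C unfolding in_C_def by blast
  have lhs: "j\<^sup>2 / (2 * mf a b x powr \<alpha>) + V x = trig n a b x"
    unfolding mf_def using m_inv[OF a_pos j_nz w] by simp
  have pk: "p k * ((p k * a k + q k * b k) / ((p k)\<^sup>2 + (q k)\<^sup>2)) - q k * ((p k * b k - q k * a k) / ((p k)\<^sup>2 + (q k)\<^sup>2)) = a k"
    "p k * ((p k * b k - q k * a k) / ((p k)\<^sup>2 + (q k)\<^sup>2)) + q k * ((p k * a k + q k * b k) / ((p k)\<^sup>2 + (q k)\<^sup>2)) = b k"
    if "k \<in> {1..n}" for k
  proof -
    have nz: "(p k)\<^sup>2 + (q k)\<^sup>2 \<noteq> 0" using pq that by (metis less_irrefl)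
    show "p k * ((p k * a k + q k * b k) / ((p k)\<^sup>2 + (q k)\<^sup>2)) - q k * ((p k * b k - q k * a k) / ((p k)\<^sup>2 + (q k)\<^sup>2)) = a k"
      by (rule rot_inv(1)[OF nz])
    show "p k * ((p k * b k - q k * a k) / ((p k)\<^sup>2 + (q k)\<^sup>2)) + q k * ((p k * a k + q k * b k) / ((p k)\<^sup>2 + (q k)\<^sup>2)) = b k"
      by (rule rot_inv(2)[OF nz])
  qed
  have "integral {0..1} (\<lambda>y. G (x - y) * mf a b y) = p 0 * 1 + (\<Sum>k=1..n.
      cos (2 * pi * real k * x) * a k + sin (2 * pi * real k * x) * b k)"
    apply (subst conv_expand[OF mf_cont[OF C]])
    apply (subst I1)
    apply (rule arg_cong[where f="\<lambda>z. p 0 * 1 + z"])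
    apply (rule sum.cong[OF refl])
    apply (simp only: Ic Is pk)
    done
  then show "j\<^sup>2 / (2 * mf a b x powr \<alpha>) + V x = integral {0..1} (\<lambda>y. G (x - y) * mf a b y) + (a 0 - p 0)"
    unfolding lhs trig_def by (simp add: mult.commute)
qed

lemma deriv_a:
  assumes C: "in_C n V a b" and k: "k \<le> n"
  shows "((\<lambda>t. Phi \<alpha> j n V (a(k := t)) b) has_real_derivative
            integral {0..1} (\<lambda>y. mf a b y * cos (2 * pi * real k * y))) (at (a k))"
proof -
  have e: "(\<lambda>t. Phi \<alpha> j n V (a(k := t)) b) = (\<lambda>t. integral {0..1} (\<lambda>y. phi \<alpha> j
      ((trig n a b y - V y) + (t - a k) * cos (2 * pi * real k * y))))"
    unfolding Phi_def by (simp add: trig_upd_a[OF k] algebra_simps)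
  have "((\<lambda>t. integral {0..1} (\<lambda>y. phi \<alpha> j
      ((trig n a b y - V y) + (t - a k) * cos (2 * pi * real k * y)))) has_real_derivative
      integral {0..1} (\<lambda>y. c / (trig n a b y - V y) powr (1 / \<alpha>) * cos (2 * pi * real k * y))) (at (a k))"
    by (rule deriv_param[OF a_pos]) (use C in \<open>auto simp: in_C_def intro!: continuous_intros wcont\<close>)
  then show ?thesis unfolding e mf_def .
qed

lemma deriv_b:
  assumes C: "in_C n V a b" and k: "k \<in> {1..n}"
  shows "((\<lambda>t. Phi \<alpha> j n V a (b(k := t))) has_real_derivative
            integral {0..1} (\<lambda>y. mf a b y * sin (2 * pi * real k * y))) (at (b k))"
proof -
  have e: "(\<lambda>t. Phi \<alpha> j n V a (b(k := t))) = (\<lambda>t. integral {0..1} (\<lambda>y. phi \<alpha> j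
      ((trig n a b y - V y) + (t - b k) * sin (2 * pi * real k * y))))"
    unfolding Phi_def by (simp add: trig_upd_b[OF k] algebra_simps)
  have "((\<lambda>t. integral {0..1} (\<lambda>y. phi \<alpha> j
      ((trig n a b y - V y) + (t - b k) * sin (2 * pi * real k * y)))) has_real_derivative
      integral {0..1} (\<lambda>y. c / (trig n a b y - V y) powr (1 / \<alpha>) * sin (2 * pi * real k * y))) (at (b k))"
    by (rule deriv_param[OF a_pos]) (use C in \<open>auto simp: in_C_def intro!: continuous_intros wcont\<close>)
  then show ?thesis unfolding e mf_def .
qed

lemma S_iff:
  assumes C: "in_C n V a b"
  shows "system_S \<alpha> j n V p q a b \<longleftrightarrow>
    (integral {0..1} (mf a b) = 1 \<and>
     (\<forall>k\<in>{1..n}. integral {0..1} (\<lambda>y. mf a b y * cos (2 * pi * real k * y))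
               = (p k * a k + q k * b k) / ((p k)\<^sup>2 + (q k)\<^sup>2) \<and>
       integral {0..1} (\<lambda>y. mf a b y * sin (2 * pi * real k * y))
               = (p k * b k - q k * a k) / ((p k)\<^sup>2 + (q k)\<^sup>2)))"
proof -
  have d0: "((\<lambda>t. Phi \<alpha> j n V (a(0 := t)) b) has_real_derivative integral {0..1} (mf a b)) (at (a 0))"
    using deriv_a[OF C, of 0] by simp
  show ?thesis
    unfolding system_S_def
    using d0 deriv_a[OF C] deriv_b[OF C] DERIV_unique
    by (smt (verit, best) atLeastAtMost_iff)
qed



lemma P_unique:
  assumes s1: "solves_P \<alpha> j V G m1 H1" and s2: "solves_P \<alpha> j V G m2 H2"
  shows "m1 = m2 \<and> H1 = H2"
proof -
  from s1 have C1: "C0_T m1" and p1: "\<And>x. m1 x > 0" and I1: "integral {0..1} m1 = 1"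
    and e1: "\<And>x. j\<^sup>2 / (2 * m1 x powr \<alpha>) + V x = integral {0..1} (\<lambda>y. G (x - y) * m1 y) + H1"
    unfolding solves_P_def by auto
  from s2 have C2: "C0_T m2" and p2: "\<And>x. m2 x > 0" and I2: "integral {0..1} m2 = 1"
    and e2: "\<And>x. j\<^sup>2 / (2 * m2 x powr \<alpha>) + V x = integral {0..1} (\<lambda>y. G (x - y) * m2 y) + H2"
    unfolding solves_P_def by auto
  have cm1: "continuous_on S m1" for S using C1 unfolding C0_T_def by (auto intro: continuous_on_subset)
  have cm2: "continuous_on S m2" for S using C2 unfolding C0_T_def by (auto intro: continuous_on_subset)
  define f where "f = (\<lambda>x. m1 x - m2 x)"
  have cf: "continuous_on S f" for S unfolding f_def by (intro continuous_intros cm1 cm2)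
  have Cf: "C0_T f" using C1 C2 unfolding C0_T_def f_def periodic1_def by (auto intro: continuous_intros)
  define E1 where "E1 = (\<lambda>x. j\<^sup>2 / (2 * m1 x powr \<alpha>))"
  define E2 where "E2 = (\<lambda>x. j\<^sup>2 / (2 * m2 x powr \<alpha>))"
  have cE1: "continuous_on S E1" for S unfolding E1_def using p1
    by (intro continuous_intros cm1) (auto simp: less_le)
  have cE2: "continuous_on S E2" for S unfolding E2_def using p2
    by (intro continuous_intros cm2) (auto simp: less_le)
  define g where "g = (\<lambda>x. f x * (E1 x - E2 x))"
  have cg: "continuous_on S g" for S unfolding g_def by (intro continuous_intros cf cE1 cE2)
  have If: "integral {0..1} f = 0"
    unfolding f_def using I1 I2 integral_diff[OF integrable01[OF cm1] integrable01[OF cm2]] by simp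
  have inner: "integral {0..1} (\<lambda>y. G (x - y) * f x * f y) = g x - (H1 - H2) * f x" for x
  proof -
    have i1: "(\<lambda>y. G (x - y) * m1 y) integrable_on {0..1}"
      by (rule integrable01) (intro continuous_intros trig_cont_shift cm1)
    have i2: "(\<lambda>y. G (x - y) * m2 y) integrable_on {0..1}"
      by (rule integrable01) (intro continuous_intros trig_cont_shift cm2)
    have "integral {0..1} (\<lambda>y. G (x - y) * f x * f y) = integral {0..1} (\<lambda>y. f x * (G (x - y) * m1 y - G (x - y) * m2 y))"
      unfolding f_def by (rule integral_cong) (simp add: algebra_simps)
    also have "\<dots> = f x * (integral {0..1} (\<lambda>y. G (x - y) * m1 y) - integral {0..1} (\<lambda>y. G (x - y) * m2 y))"
      by (simp add: integral_diff[OF i1 i2])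
    also have "\<dots> = f x * ((E1 x + V x - H1) - (E2 x + V x - H2))"
      using e1[of x] e2[of x] unfolding E1_def E2_def by simp
    also have "\<dots> = g x - (H1 - H2) * f x" unfolding g_def by (simp add: algebra_simps)
    finally show ?thesis .
  qed
  have "0 \<le> integral {0..1} (\<lambda>x. integral {0..1} (\<lambda>y. G (x - y) * f x * f y))"
    using condM Cf unfolding cond_M_def by blast
  also have "\<dots> = integral {0..1} (\<lambda>x. g x - (H1 - H2) * f x)"
    by (rule integral_cong) (rule inner)
  also have "\<dots> = integral {0..1} g - (H1 - H2) * integral {0..1} f"
    using integral_diff[OF integrable01[OF cg] integrable01[of "\<lambda>x. (H1 - H2) * f x", OF continuous_on_mult_left[OF cf]]] by simp
  finally have Ig: "0 \<le> integral {0..1} g" using If by simp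
  have gle: "g x \<le> 0" for x
  proof (cases "m2 x \<le> m1 x")
    case True
    have "m2 x powr \<alpha> \<le> m1 x powr \<alpha>" using True p2[of x] a_pos by (intro powr_mono2) auto
    then have "E1 x \<le> E2 x" unfolding E1_def E2_def using p1[of x] p2[of x]
      by (intro divide_left_mono mult_left_mono) (auto intro!: mult_pos_pos)
    then show ?thesis unfolding g_def f_def using True by (simp add: mult_nonneg_nonpos)
  next
    case False
    have "m1 x powr \<alpha> \<le> m2 x powr \<alpha>" using False p1[of x] a_pos by (intro powr_mono2) auto
    then have "E2 x \<le> E1 x" unfolding E1_def E2_def using p1[of x] p2[of x]
      by (intro divide_left_mono mult_left_mono) (auto intro!: mult_pos_pos)
    then show ?thesis unfolding g_def f_def using False by (simp add: mult_nonpos_nonneg)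
  qed
  have g0: "g x = 0" if x: "x \<in> {0..1}" for x
  proof -
    have hg: "(g has_integral integral {0..1} g) {0..1}" using integrable01[OF cg] by (rule integrable_integral)
    have h0: "((\<lambda>x. 0::real) has_integral 0) {0..1}" by (rule has_integral_0)
    have "integral {0..1} g \<le> 0" using has_integral_le[OF hg h0] gle by blast
    then have "integral {0..1} g = 0" using Ig by simp
    then have "((\<lambda>x. - g x) has_integral 0) (cbox 0 1)"
      using has_integral_neg[OF hg] by simp
    from has_integral_0_cbox_imp_0[OF _ _ this, of x] x gle show ?thesis
      by (auto intro!: continuous_intros cg)
  qed
  have eq01: "m1 x = m2 x" if x: "x \<in> {0..1}" for x
  proof (rule ccontr)
    assume ne: "m1 x \<noteq> m2 x"
    show False
    proof (cases "m2 x < m1 x")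
      case True
      have "m2 x powr \<alpha> < m1 x powr \<alpha>" using True p2[of x] a_pos by (intro powr_less_mono2) auto
      then have "E1 x < E2 x" unfolding E1_def E2_def using p1[of x] p2[of x] j_nz
        by (intro divide_strict_left_mono mult_strict_left_mono) (auto intro!: mult_pos_pos)
      then have "g x < 0" unfolding g_def f_def using True by (simp add: mult_pos_neg)
      then show False using g0[OF x] by simp
    next
      case False
      then have F: "m1 x < m2 x" using ne by simp
      have "m1 x powr \<alpha> < m2 x powr \<alpha>" using F p1[of x] a_pos by (intro powr_less_mono2) auto
      then have "E2 x < E1 x" unfolding E1_def E2_def using p1[of x] p2[of x] j_nz
        by (intro divide_strict_left_mono mult_strict_left_mono) (auto intro!: mult_pos_pos)
      then have "g x < 0" unfolding g_def f_def using F by (simp add: mult_neg_pos)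
      then show False using g0[OF x] by simp
    qed
  qed
  have meq: "m1 = m2"
  proof
    fix x
    have "m1 x = m1 (x - real_of_int \<lfloor>x\<rfloor>)" using C1 periodic1_frac unfolding C0_T_def by blast
    also have "\<dots> = m2 (x - real_of_int \<lfloor>x\<rfloor>)" using eq01 frac_in01 by blast
    also have "\<dots> = m2 x" using C2 periodic1_frac unfolding C0_T_def by metis
    finally show "m1 x = m2 x" .
  qed
  have "H1 = H2" using e1[of 0] e2[of 0] unfolding meq by simp
  then show ?thesis using meq by simp
qed

end


section \<open>Existence: preliminaries\<close>

lemma integral_pos01:
  fixes g :: "real \<Rightarrow> real"
  assumes cg: "continuous_on {0..1} g" and pos: "\<And>x. x \<in> {0..1} \<Longrightarrow> g x > 0"
  shows "integral {0..1} g > 0"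
proof -
  obtain x1 where x1: "x1 \<in> {0..1}" "\<And>y. y \<in> {0..1} \<Longrightarrow> g x1 \<le> g y"
    using continuous_attains_inf[of "{0..1::real}" g] cg by auto
  have hg: "(g has_integral integral {0..1} g) {0..1}" using integrable01[OF cg] by (rule integrable_integral)
  have h0: "((\<lambda>x::real. g x1) has_integral g x1) {0..1}"
    using has_integral_const_real[where c="g x1" and a=0 and b=1] by simp
  have "g x1 \<le> integral {0..1} g" using has_integral_le[OF h0 hg] x1 by blast
  then show ?thesis using pos[OF x1(1)] by simp
qed

lemma int_bound01:
  fixes g :: "real \<Rightarrow> real"
  assumes cg: "continuous_on {0..1} g" and b: "\<And>x. x \<in> {0..1} \<Longrightarrow> \<bar>g x\<bar> \<le> B"
  shows "\<bar>integral {0..1} g\<bar> \<le> B"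
proof -
  have "norm (integral {0..1} g) \<le> integral {0..1} (\<lambda>x::real. B)"
    by (rule integral_norm_bound_integral[OF integrable01[OF cg] integrable01[OF continuous_on_const]])
       (use b in auto)
  then show ?thesis by simp
qed

context mfg begin

definition A :: "(nat \<Rightarrow> real) \<Rightarrow> nat \<Rightarrow> real" where
  "A u k = p k * u (k - 1) - q k * u (n + k - 1)"
definition B :: "(nat \<Rightarrow> real) \<Rightarrow> nat \<Rightarrow> real" where
  "B u k = q k * u (k - 1) + p k * u (n + k - 1)"
definition aa :: "(nat \<Rightarrow> real) \<Rightarrow> real \<Rightarrow> nat \<Rightarrow> real" where
  "aa u t = (\<lambda>k. if k = 0 then t else A u k)"
definition W :: "(nat \<Rightarrow> real) \<Rightarrow> real \<Rightarrow> real" where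
  "W u x = trig n (aa u 0) (B u) x - V x"
definition Q :: "(real \<Rightarrow> real) \<Rightarrow> (nat \<Rightarrow> real) \<Rightarrow> real \<Rightarrow> real" where
  "Q e u t = integral {0..1} (\<lambda>x. c / (t + W u x) powr (1 / \<alpha>) * e x)"
definition good :: "(nat \<Rightarrow> real) \<Rightarrow> real \<Rightarrow> bool" where
  "good u t \<longleftrightarrow> (\<forall>x. t + W u x > 0)"

abbreviation "hh u t \<equiv> Q (\<lambda>x. 1) u t"

lemma trig_aa: "trig n (aa u t) (B u) x - V x = t + W u x"
proof -
  have "(\<Sum>k = 1..n. aa u t k * cos (2 * pi * real k * x) + B u k * sin (2 * pi * real k * x))
      = (\<Sum>k = 1..n. aa u 0 k * cos (2 * pi * real k * x) + B u k * sin (2 * pi * real k * x))"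
    by (rule sum.cong) (auto simp: aa_def)
  then show ?thesis unfolding W_def trig_def by (simp add: aa_def)
qed

lemma trig_aa0: "trig n (aa u 0) (B u) x = (\<Sum>k=1..n. A u k * cos (2 * pi * real k * x) + B u k * sin (2 * pi * real k * x))"
  unfolding trig_def by (simp add: aa_def)

lemma good_inC: "good u t \<longleftrightarrow> in_C n V (aa u t) (B u)"
  unfolding good_def in_C_def using trig_aa by simp

lemma mf_aa: "mf (aa u t) (B u) x = c / (t + W u x) powr (1 / \<alpha>)"
  unfolding mf_def trig_aa ..

lemma W_cont: "continuous_on S (W u)"
  unfolding W_def by (rule wcont)

lemma W_per: "periodic1 (\<lambda>x. t + W u x)"
  using trig_periodic[of n "aa u 0" "B u"] Vper unfolding periodic1_def W_def by simp

lemma good01: "good u t \<longleftrightarrow> (\<forall>x\<in>{0..1}. t + W u x > 0)"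
  unfolding good_def using periodic1_reduce[OF W_per] by metis

definition Lw :: real where "Lw = (\<Sum>k=1..n. 2 * (\<bar>p k\<bar> + \<bar>q k\<bar>)) + 1"

lemma Lw_pos: "Lw > 0"
proof -
  have "(\<Sum>k=1..n. 2 * (\<bar>p k\<bar> + \<bar>q k\<bar>)) \<ge> 0" by (intro sum_nonneg) simp
  then show ?thesis unfolding Lw_def by simp
qed

lemma W_close:
  assumes d: "\<And>i. i < 2 * n \<Longrightarrow> \<bar>u i - u0 i\<bar> \<le> d" and dpos: "d \<ge> 0"
  shows "\<bar>W u x - W u0 x\<bar> \<le> Lw * d"
proof -
  have d0: "d \<ge> 0" if "n > 0" using d[of 0] that by simp
  have "W u x - W u0 x = (\<Sum>k=1..n. A u k * cos (2 * pi * real k * x) + B u k * sin (2 * pi * real k * x))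
      - (\<Sum>k=1..n. A u0 k * cos (2 * pi * real k * x) + B u0 k * sin (2 * pi * real k * x))"
    unfolding W_def trig_aa0 by simp
  also have "\<dots> = (\<Sum>k=1..n. (A u k * cos (2 * pi * real k * x) + B u k * sin (2 * pi * real k * x))
      - (A u0 k * cos (2 * pi * real k * x) + B u0 k * sin (2 * pi * real k * x)))"
    by (rule sum_subtractf[symmetric])
  also have "\<dots> = (\<Sum>k=1..n. (A u k - A u0 k) * cos (2 * pi * real k * x) + (B u k - B u0 k) * sin (2 * pi * real k * x))"
    by (rule sum.cong) (simp_all add: algebra_simps)
  finally have eq: "W u x - W u0 x = (\<Sum>k=1..n. (A u k - A u0 k) * cos (2 * pi * real k * x) + (B u k - B u0 k) * sin (2 * pi * real k * x))" .
  have "\<bar>W u x - W u0 x\<bar> \<le> (\<Sum>k=1..n. \<bar>(A u k - A u0 k) * cos (2 * pi * real k * x) + (B u k - B u0 k) * sin (2 * pi * real k * x)\<bar>)"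
    unfolding eq by (rule sum_abs)
  also have "\<dots> \<le> (\<Sum>k=1..n. 2 * (\<bar>p k\<bar> + \<bar>q k\<bar>) * d)"
  proof (rule sum_mono)
    fix k assume k: "k \<in> {1..n}"
    have i1: "\<bar>u (k - 1) - u0 (k - 1)\<bar> \<le> d" using k by (intro d) auto
    have i2: "\<bar>u (n + k - 1) - u0 (n + k - 1)\<bar> \<le> d" using k by (intro d) auto
    have dd: "d \<ge> 0" using i1 by linarith
    have "\<bar>A u k - A u0 k\<bar> = \<bar>p k * (u (k - 1) - u0 (k - 1)) - q k * (u (n + k - 1) - u0 (n + k - 1))\<bar>"
      unfolding A_def by (simp add: algebra_simps)
    also have "\<dots> \<le> \<bar>p k\<bar> * \<bar>u (k - 1) - u0 (k - 1)\<bar> + \<bar>q k\<bar> * \<bar>u (n + k - 1) - u0 (n + k - 1)\<bar>"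
      by (simp add: abs_mult[symmetric] abs_triangle_ineq4)
    also have "\<dots> \<le> \<bar>p k\<bar> * d + \<bar>q k\<bar> * d"
      by (intro add_mono mult_left_mono i1 i2) auto
    finally have hA: "\<bar>A u k - A u0 k\<bar> \<le> \<bar>p k\<bar> * d + \<bar>q k\<bar> * d" .
    have "\<bar>B u k - B u0 k\<bar> = \<bar>q k * (u (k - 1) - u0 (k - 1)) + p k * (u (n + k - 1) - u0 (n + k - 1))\<bar>"
      unfolding B_def by (simp add: algebra_simps)
    also have "\<dots> \<le> \<bar>q k\<bar> * \<bar>u (k - 1) - u0 (k - 1)\<bar> + \<bar>p k\<bar> * \<bar>u (n + k - 1) - u0 (n + k - 1)\<bar>"
      by (simp add: abs_mult[symmetric] abs_triangle_ineq)
    also have "\<dots> \<le> \<bar>q k\<bar> * d + \<bar>p k\<bar> * d"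
      by (intro add_mono mult_left_mono i1 i2) auto
    finally have hB: "\<bar>B u k - B u0 k\<bar> \<le> \<bar>p k\<bar> * d + \<bar>q k\<bar> * d" by simp
    have "\<bar>(A u k - A u0 k) * cos (2 * pi * real k * x)\<bar> \<le> \<bar>A u k - A u0 k\<bar>"
      by (simp add: abs_mult mult_left_le)
    moreover have "\<bar>(B u k - B u0 k) * sin (2 * pi * real k * x)\<bar> \<le> \<bar>B u k - B u0 k\<bar>"
      by (simp add: abs_mult mult_left_le)
    ultimately show "\<bar>(A u k - A u0 k) * cos (2 * pi * real k * x) + (B u k - B u0 k) * sin (2 * pi * real k * x)\<bar>
        \<le> 2 * (\<bar>p k\<bar> + \<bar>q k\<bar>) * d"
      using hA hB abs_triangle_ineq[of "(A u k - A u0 k) * cos (2 * pi * real k * x)" "(B u k - B u0 k) * sin (2 * pi * real k * x)"]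
      by (simp add: algebra_simps)
  qed
  also have "\<dots> \<le> Lw * d"
  proof (cases "n > 0")
    case True
    have e: "(\<Sum>k=1..n. 2 * (\<bar>p k\<bar> + \<bar>q k\<bar>) * d) = (\<Sum>k=1..n. 2 * (\<bar>p k\<bar> + \<bar>q k\<bar>)) * d"
      by (rule sum_distrib_right[symmetric])
    show ?thesis unfolding e Lw_def distrib_right using d0[OF True] by linarith
  next
    case False
    then show ?thesis unfolding Lw_def using dpos by simp
  qed
  finally show ?thesis .
qed


lemma Psi_cont: "(\<And>x. x \<in> S \<Longrightarrow> w x > 0) \<Longrightarrow> continuous_on S w \<Longrightarrow> continuous_on S e \<Longrightarrow>
   continuous_on S (\<lambda>x. c / w x powr (1 / \<alpha>) * e x)"
  by (intro continuous_intros) (auto simp: less_le)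

lemma int_cont_gen:
  fixes w0 e :: "real \<Rightarrow> real"
  assumes cw0: "continuous_on {0..1} w0" and pos: "\<And>x. x \<in> {0..1} \<Longrightarrow> w0 x > 0"
    and ce: "continuous_on {0..1} e" and eb: "\<And>x. x \<in> {0..1} \<Longrightarrow> \<bar>e x\<bar> \<le> 1" and ep: "\<epsilon> > 0"
  shows "\<exists>\<delta>>0. \<forall>w. continuous_on {0..1} w \<longrightarrow> (\<forall>x\<in>{0..1}. \<bar>w x - w0 x\<bar> \<le> \<delta>) \<longrightarrow>
     (\<forall>x\<in>{0..1}. w x > 0) \<and>
     \<bar>integral {0..1} (\<lambda>x. c / w x powr (1 / \<alpha>) * e x) - integral {0..1} (\<lambda>x. c / w0 x powr (1 / \<alpha>) * e x)\<bar> < \<epsilon>"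
proof -
  obtain x1 where x1: "x1 \<in> {0..1}" "\<And>y. y \<in> {0..1} \<Longrightarrow> w0 x1 \<le> w0 y"
    using continuous_attains_inf[of "{0..1::real}" w0] cw0 by auto
  obtain x2 where x2: "x2 \<in> {0..1}" "\<And>y. y \<in> {0..1} \<Longrightarrow> w0 y \<le> w0 x2"
    using continuous_attains_sup[of "{0..1::real}" w0] cw0 by auto
  define \<mu> where "\<mu> = w0 x1"
  define M where "M = w0 x2"
  have mu: "\<mu> > 0" unfolding \<mu>_def using pos[OF x1(1)] .
  define K where "K = {\<mu>/2 .. M + \<mu>}"
  have cK: "continuous_on K (\<lambda>s. c / s powr (1 / \<alpha>))"
    unfolding K_def using mu by (intro continuous_intros) auto
  have "uniformly_continuous_on K (\<lambda>s. c / s powr (1 / \<alpha>))"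
    by (rule compact_uniformly_continuous[OF cK]) (simp add: K_def)
  then obtain d where d: "d > 0" and dK: "\<And>s s'. s \<in> K \<Longrightarrow> s' \<in> K \<Longrightarrow> dist s' s < d \<Longrightarrow>
      dist (c / s' powr (1 / \<alpha>)) (c / s powr (1 / \<alpha>)) < \<epsilon>/2"
    unfolding uniformly_continuous_on_def using ep by (meson half_gt_zero)
  define \<delta> where "\<delta> = min (\<mu>/2) (d/2)"
  have dpos: "\<delta> > 0" unfolding \<delta>_def using mu d by simp
  show ?thesis
  proof (intro exI[of _ \<delta>] conjI dpos allI impI)
    fix w assume cw: "continuous_on {0..1} w" and cl: "\<forall>x\<in>{0..1}. \<bar>w x - w0 x\<bar> \<le> \<delta>"
    have wK: "w x \<in> K" and w0K: "w0 x \<in> K" and wd: "dist (w x) (w0 x) < d" if x: "x \<in> {0..1}" for x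
    proof -
      have "\<mu> \<le> w0 x" "w0 x \<le> M" using x1(2)[OF x] x2(2)[OF x] unfolding \<mu>_def M_def by auto
      moreover have h: "\<bar>w x - w0 x\<bar> \<le> \<mu>/2" "\<bar>w x - w0 x\<bar> \<le> d/2" using cl x unfolding \<delta>_def by auto
      moreover have "w x - w0 x \<le> \<mu>/2" "w0 x - w x \<le> \<mu>/2" using h(1) by linarith+
      ultimately show "w x \<in> K" "w0 x \<in> K" "dist (w x) (w0 x) < d" unfolding K_def dist_real_def using mu d
        by (simp_all only: atLeastAtMost_iff) linarith+
    qed
    have wpos: "w x > 0" if "x \<in> {0..1}" for x using wK[OF that] mu unfolding K_def by auto
    then show "\<forall>x\<in>{0..1}. 0 < w x" by blast
    have c1: "continuous_on {0..1} (\<lambda>x. c / w x powr (1 / \<alpha>) * e x)" by (rule Psi_cont[OF wpos cw ce])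
    have c2: "continuous_on {0..1} (\<lambda>x. c / w0 x powr (1 / \<alpha>) * e x)" by (rule Psi_cont[OF pos cw0 ce])
    have "integral {0..1} (\<lambda>x. c / w x powr (1 / \<alpha>) * e x) - integral {0..1} (\<lambda>x. c / w0 x powr (1 / \<alpha>) * e x)
        = integral {0..1} (\<lambda>x. c / w x powr (1 / \<alpha>) * e x - c / w0 x powr (1 / \<alpha>) * e x)"
      by (rule integral_diff[OF integrable01[OF c1] integrable01[OF c2], symmetric])
    also have "\<bar>\<dots>\<bar> \<le> \<epsilon>/2"
    proof (rule int_bound01)
      show "continuous_on {0..1} (\<lambda>x. c / w x powr (1 / \<alpha>) * e x - c / w0 x powr (1 / \<alpha>) * e x)"
        by (intro continuous_intros c1 c2)
      fix x :: real assume x: "x \<in> {0..1}"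
      have "\<bar>c / w x powr (1 / \<alpha>) - c / w0 x powr (1 / \<alpha>)\<bar> < \<epsilon>/2"
        using dK[OF w0K[OF x] wK[OF x] wd[OF x]] by (simp add: dist_real_def)
      moreover have "\<bar>e x\<bar> \<le> 1" by (rule eb[OF x])
      ultimately have "\<bar>(c / w x powr (1 / \<alpha>) - c / w0 x powr (1 / \<alpha>)) * e x\<bar> \<le> \<epsilon>/2 * 1"
        unfolding abs_mult using ep by (intro mult_mono) auto
      then show "\<bar>c / w x powr (1 / \<alpha>) * e x - c / w0 x powr (1 / \<alpha>) * e x\<bar> \<le> \<epsilon>/2"
        by (simp add: algebra_simps)
    qed
    finally show "\<bar>integral {0..1} (\<lambda>x. c / w x powr (1 / \<alpha>) * e x) - integral {0..1} (\<lambda>x. c / w0 x powr (1 / \<alpha>) * e x)\<bar> < \<epsilon>"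
      using ep by simp
  qed
qed

lemma Q_cont:
  assumes g0: "good u0 t0" and ce: "continuous_on {0..1} e" and eb: "\<And>x. x \<in> {0..1} \<Longrightarrow> \<bar>e x\<bar> \<le> 1"
    and ep: "\<epsilon> > 0"
  shows "\<exists>\<delta>>0. \<forall>u t. (\<forall>i<2*n. \<bar>u i - u0 i\<bar> < \<delta>) \<longrightarrow> \<bar>t - t0\<bar> < \<delta> \<longrightarrow>
     good u t \<and> \<bar>Q e u t - Q e u0 t0\<bar> < \<epsilon>"
proof -
  have cw0: "continuous_on {0..1} (\<lambda>x. t0 + W u0 x)" by (intro continuous_intros W_cont)
  have pos: "\<And>x. x \<in> {0..1} \<Longrightarrow> t0 + W u0 x > 0" using g0 unfolding good_def by blast
  obtain \<delta>0 where d0: "\<delta>0 > 0" and H: "\<And>w. continuous_on {0..1} w \<Longrightarrow> (\<forall>x\<in>{0..1}. \<bar>w x - (t0 + W u0 x)\<bar> \<le> \<delta>0) \<Longrightarrow>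
     (\<forall>x\<in>{0..1}. w x > 0) \<and>
     \<bar>integral {0..1} (\<lambda>x. c / w x powr (1 / \<alpha>) * e x) - integral {0..1} (\<lambda>x. c / (t0 + W u0 x) powr (1 / \<alpha>) * e x)\<bar> < \<epsilon>"
    using int_cont_gen[OF cw0 pos ce eb ep] by blast
  define \<delta> where "\<delta> = \<delta>0 / (Lw + 1)"
  have dpos: "\<delta> > 0" unfolding \<delta>_def using d0 Lw_pos by simp
  show ?thesis
  proof (intro exI[of _ \<delta>] conjI dpos allI impI)
    fix u t assume cu: "\<forall>i<2*n. \<bar>u i - u0 i\<bar> < \<delta>" and ct: "\<bar>t - t0\<bar> < \<delta>"
    have cw: "continuous_on {0..1} (\<lambda>x. t + W u x)" by (intro continuous_intros W_cont)
    have cl: "\<forall>x\<in>{0..1}. \<bar>(t + W u x) - (t0 + W u0 x)\<bar> \<le> \<delta>0"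
    proof
      fix x
      have "\<bar>W u x - W u0 x\<bar> \<le> Lw * \<delta>" by (rule W_close) (use cu dpos in \<open>auto simp: less_imp_le\<close>)
      then have "\<bar>(t + W u x) - (t0 + W u0 x)\<bar> \<le> \<delta> + Lw * \<delta>" using ct by linarith
      also have "\<dots> = (Lw + 1) * \<delta>" by (simp add: algebra_simps)
      also have "\<dots> = \<delta>0" unfolding \<delta>_def using Lw_pos by simp
      finally show "\<bar>(t + W u x) - (t0 + W u0 x)\<bar> \<le> \<delta>0" .
    qed
    from H[OF cw cl] show "good u t" "\<bar>Q e u t - Q e u0 t0\<bar> < \<epsilon>"
      unfolding good01 Q_def by auto
  qed
qed


lemma blowup:
  fixes Y :: "real \<Rightarrow> real" and x0 K :: real
  assumes cY: "continuous_on {0..1} Y" and Y0: "\<And>x. Y x \<ge> 0" and x0: "x0 \<in> {0..1}" and Kp: "K > 0"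
    and quad: "\<And>x. \<bar>x - x0\<bar> \<le> 1 \<Longrightarrow> Y x \<le> K * (x - x0)\<^sup>2"
  shows "\<exists>s>0. integral {0..1} (\<lambda>x. c / (s + Y x) powr (1 / \<alpha>) * 1) > 1"
proof -
  define \<kappa> where "\<kappa> = sqrt K"
  have kp: "\<kappa> > 0" unfolding \<kappa>_def using Kp by simp
  have kK: "\<kappa>\<^sup>2 = K" unfolding \<kappa>_def using Kp by simp
  define r where "r = min (1/2) (1 / (2 * \<kappa>))"
  have rp: "r > 0" "r \<le> 1/2" unfolding r_def using kp by auto
  have kr: "\<kappa> * r \<le> 1/2"
  proof -
    have "\<kappa> * r \<le> \<kappa> * (1 / (2 * \<kappa>))" unfolding r_def using kp by (intro mult_left_mono) auto
    also have "\<dots> = 1/2" using kp by simp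
    finally show ?thesis .
  qed
  have krp: "\<kappa> * r > 0" using kp rp by simp
  define E where "E = exp (\<kappa> / c + 1)"
  have E1: "E \<ge> 1" unfolding E_def using kp c_pos by simp
  define \<sigma> where "\<sigma> = \<kappa> * r / E"
  have sp: "\<sigma> > 0" unfolding \<sigma>_def using krp E1 by simp
  have skr: "\<sigma> \<le> \<kappa> * r" unfolding \<sigma>_def using krp E1
    by (simp add: divide_le_eq) (metis mult.right_neutral mult_left_mono less_imp_le)
  have lns: "ln \<sigma> = ln (\<kappa> * r) - (\<kappa> / c + 1)"
    unfolding \<sigma>_def E_def using krp kp rp by (simp add: ln_div)
  define f where "f = (\<lambda>x. c / (\<sigma>\<^sup>2 + Y x) powr (1 / \<alpha>) * 1)"
  have fpos: "\<sigma>\<^sup>2 + Y x > 0" for x using sp Y0[of x] by (simp add: add_pos_nonneg)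
  have cf: "continuous_on S f" if "S \<subseteq> {0..1}" for S
    unfolding f_def by (rule Psi_cont[OF fpos]) (intro continuous_intros continuous_on_subset[OF cY that])+
  have fnn: "f x \<ge> 0" for x unfolding f_def using c_pos by simp
  define L where "L = (\<lambda>x. c / (\<sigma> + \<kappa> * \<bar>x - x0\<bar>))"
  have fL: "L x \<le> f x" if x: "\<bar>x - x0\<bar> \<le> r" for x
  proof -
    define z where "z = \<sigma>\<^sup>2 + Y x"
    have zp: "z > 0" unfolding z_def by (rule fpos)
    have "Y x \<le> K * (x - x0)\<^sup>2" using quad x rp by simp
    also have "\<dots> = (\<kappa> * \<bar>x - x0\<bar>)\<^sup>2" using kK by (simp add: power_mult_distrib)
    finally have Yb: "Y x \<le> (\<kappa> * \<bar>x - x0\<bar>)\<^sup>2" .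
    have kx: "\<kappa> * \<bar>x - x0\<bar> \<le> \<kappa> * r" using x kp by (simp add: mult_left_mono)
    have "(\<kappa> * \<bar>x - x0\<bar>)\<^sup>2 \<le> (\<kappa> * r)\<^sup>2" using kx kp by (intro power_mono) auto
    also have "\<dots> \<le> (1/2)\<^sup>2" using kr krp by (intro power_mono) auto
    finally have b1: "(\<kappa> * \<bar>x - x0\<bar>)\<^sup>2 \<le> 1/4" by (simp add: power2_eq_square)
    have "\<sigma>\<^sup>2 \<le> (\<kappa> * r)\<^sup>2" using skr sp by (intro power_mono) auto
    also have "\<dots> \<le> (1/2)\<^sup>2" using kr krp by (intro power_mono) auto
    finally have b2: "\<sigma>\<^sup>2 \<le> 1/4" by (simp add: power2_eq_square)
    have z1: "z \<le> 1" unfolding z_def using Yb b1 b2 by linarith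
    have a12: "1/2 \<le> 1 / \<alpha>" using a_pos a_le2 by (simp add: field_simps)
    have "z powr (1 / \<alpha>) \<le> z powr (1/2)" by (rule powr_mono'[OF a12]) (use zp z1 in auto)
    also have "\<dots> = sqrt z" using zp by (simp add: powr_half_sqrt)
    also have "\<dots> \<le> sqrt (\<sigma>\<^sup>2 + (\<kappa> * \<bar>x - x0\<bar>)\<^sup>2)" unfolding z_def using Yb by simp
    also have "\<dots> \<le> sqrt (\<sigma>\<^sup>2) + sqrt ((\<kappa> * \<bar>x - x0\<bar>)\<^sup>2)" by (rule sqrt_add_le_add_sqrt) auto
    also have "\<dots> = \<sigma> + \<kappa> * \<bar>x - x0\<bar>" using sp kp by simp
    finally have zb: "z powr (1 / \<alpha>) \<le> \<sigma> + \<kappa> * \<bar>x - x0\<bar>" .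
    have "c / (\<sigma> + \<kappa> * \<bar>x - x0\<bar>) \<le> c / z powr (1 / \<alpha>)"
      by (rule divide_left_mono[OF zb]) (use c_pos zp sp kp in \<open>auto intro!: mult_pos_pos add_pos_nonneg\<close>)
    then show ?thesis unfolding L_def f_def z_def by simp
  qed
  have key: "c / \<kappa> * ln (\<sigma> + \<kappa> * r) - c / \<kappa> * ln \<sigma> > 1"
  proof -
    have "ln (\<kappa> * r) \<le> ln (\<sigma> + \<kappa> * r)" using sp krp by simp
    then have "c / \<kappa> * (ln (\<kappa> * r) - ln \<sigma>) \<le> c / \<kappa> * (ln (\<sigma> + \<kappa> * r) - ln \<sigma>)"
      using c_pos kp by (intro mult_left_mono) auto
    moreover have "c / \<kappa> * (ln (\<kappa> * r) - ln \<sigma>) = 1 + c / \<kappa>"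
      unfolding lns using c_pos kp by (simp add: field_simps)
    moreover have "c / \<kappa> > 0" using c_pos kp by simp
    ultimately show ?thesis by (simp add: right_diff_distrib)
  qed
  obtain J a' b' where J: "J = {a'..b'}" "J \<subseteq> {0..1}" "a' \<le> b'" "\<And>x. x \<in> J \<Longrightarrow> \<bar>x - x0\<bar> \<le> r"
    and LJ: "(L has_integral (c / \<kappa> * ln (\<sigma> + \<kappa> * r) - c / \<kappa> * ln \<sigma>)) J"
  proof (cases "x0 \<le> 1/2")
    case True
    let ?J = "{x0..x0 + r}"
    have "((\<lambda>x. c / (\<sigma> + \<kappa> * (x - x0))) has_integral
        (c / \<kappa> * ln (\<sigma> + \<kappa> * (x0 + r - x0)) - c / \<kappa> * ln (\<sigma> + \<kappa> * (x0 - x0)))) ?J"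
    proof (rule fundamental_theorem_of_calculus)
      show "x0 \<le> x0 + r" using rp by simp
      fix x assume x: "x \<in> ?J"
      have pos: "\<sigma> + \<kappa> * (x - x0) > 0" using x sp kp by (auto intro!: add_pos_nonneg)
      have inner: "((\<lambda>x. \<sigma> + \<kappa> * (x - x0)) has_real_derivative \<kappa>) (at x)"
        by (auto intro!: derivative_eq_intros)
      have d1: "((\<lambda>x. c / \<kappa> * ln (\<sigma> + \<kappa> * (x - x0))) has_real_derivative c / \<kappa> * (1 / (\<sigma> + \<kappa> * (x - x0)) * \<kappa>)) (at x)"
        by (rule DERIV_cmult, rule DERIV_chain2[OF DERIV_ln_divide[OF pos] inner])
      have e: "c / \<kappa> * (1 / (\<sigma> + \<kappa> * (x - x0)) * \<kappa>) = c / (\<sigma> + \<kappa> * (x - x0))" using kp by simp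
      have "((\<lambda>x. c / \<kappa> * ln (\<sigma> + \<kappa> * (x - x0))) has_real_derivative c / (\<sigma> + \<kappa> * (x - x0))) (at x within ?J)"
        using d1 unfolding e by (rule has_field_derivative_at_within)
      then show "((\<lambda>x. c / \<kappa> * ln (\<sigma> + \<kappa> * (x - x0))) has_vector_derivative c / (\<sigma> + \<kappa> * (x - x0))) (at x within ?J)"
        by (simp only: has_real_derivative_iff_has_vector_derivative)
    qed
    moreover have v: "c / \<kappa> * ln (\<sigma> + \<kappa> * (x0 + r - x0)) - c / \<kappa> * ln (\<sigma> + \<kappa> * (x0 - x0))
       = c / \<kappa> * ln (\<sigma> + \<kappa> * r) - c / \<kappa> * ln \<sigma>" by simp
    ultimately have "((\<lambda>x. c / (\<sigma> + \<kappa> * (x - x0))) has_integral (c / \<kappa> * ln (\<sigma> + \<kappa> * r) - c / \<kappa> * ln \<sigma>)) ?J"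
      by simp
    then have "(L has_integral (c / \<kappa> * ln (\<sigma> + \<kappa> * r) - c / \<kappa> * ln \<sigma>)) ?J"
      by (rule has_integral_eq[rotated]) (auto simp: L_def)
    moreover have "?J \<subseteq> {0..1}" using True rp x0 by auto
    moreover have "\<And>x. x \<in> ?J \<Longrightarrow> \<bar>x - x0\<bar> \<le> r" by auto
    ultimately show ?thesis using that[of ?J x0 "x0 + r"] rp by simp
  next
    case False
    let ?J = "{x0 - r..x0}"
    have "((\<lambda>x. c / (\<sigma> + \<kappa> * (x0 - x))) has_integral
        ((- (c / \<kappa>)) * ln (\<sigma> + \<kappa> * (x0 - x0)) - (- (c / \<kappa>)) * ln (\<sigma> + \<kappa> * (x0 - (x0 - r))))) ?J"
    proof (rule fundamental_theorem_of_calculus)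
      show "x0 - r \<le> x0" using rp by simp
      fix x assume x: "x \<in> ?J"
      have pos: "\<sigma> + \<kappa> * (x0 - x) > 0" using x sp kp by (auto intro!: add_pos_nonneg)
      have inner: "((\<lambda>x. \<sigma> + \<kappa> * (x0 - x)) has_real_derivative - \<kappa>) (at x)"
        by (auto intro!: derivative_eq_intros)
      have d1: "((\<lambda>x. (- (c / \<kappa>)) * ln (\<sigma> + \<kappa> * (x0 - x))) has_real_derivative (- (c / \<kappa>)) * (1 / (\<sigma> + \<kappa> * (x0 - x)) * - \<kappa>)) (at x)"
        by (rule DERIV_cmult, rule DERIV_chain2[OF DERIV_ln_divide[OF pos] inner])
      have e: "(- (c / \<kappa>)) * (1 / (\<sigma> + \<kappa> * (x0 - x)) * - \<kappa>) = c / (\<sigma> + \<kappa> * (x0 - x))" using kp by simp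
      have "((\<lambda>x. (- (c / \<kappa>)) * ln (\<sigma> + \<kappa> * (x0 - x))) has_real_derivative c / (\<sigma> + \<kappa> * (x0 - x))) (at x within ?J)"
        using d1 unfolding e by (rule has_field_derivative_at_within)
      then show "((\<lambda>x. (- (c / \<kappa>)) * ln (\<sigma> + \<kappa> * (x0 - x))) has_vector_derivative c / (\<sigma> + \<kappa> * (x0 - x))) (at x within ?J)"
        by (simp only: has_real_derivative_iff_has_vector_derivative)
    qed
    moreover have v: "(- (c / \<kappa>)) * ln (\<sigma> + \<kappa> * (x0 - x0)) - (- (c / \<kappa>)) * ln (\<sigma> + \<kappa> * (x0 - (x0 - r)))
       = c / \<kappa> * ln (\<sigma> + \<kappa> * r) - c / \<kappa> * ln \<sigma>" by simp
    ultimately have "((\<lambda>x. c / (\<sigma> + \<kappa> * (x0 - x))) has_integral (c / \<kappa> * ln (\<sigma> + \<kappa> * r) - c / \<kappa> * ln \<sigma>)) ?J"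
      by simp
    then have "(L has_integral (c / \<kappa> * ln (\<sigma> + \<kappa> * r) - c / \<kappa> * ln \<sigma>)) ?J"
      by (rule has_integral_eq[rotated]) (auto simp: L_def)
    moreover have "?J \<subseteq> {0..1}" using False rp x0 by auto
    moreover have "\<And>x. x \<in> ?J \<Longrightarrow> \<bar>x - x0\<bar> \<le> r" by auto
    ultimately show ?thesis using that[of ?J "x0 - r" x0] rp by simp
  qed
  have fJ: "(f has_integral integral J f) J" using cf[OF J(2)] unfolding J(1)
    by (intro integrable_integral integrable_continuous_interval)
  have "c / \<kappa> * ln (\<sigma> + \<kappa> * r) - c / \<kappa> * ln \<sigma> \<le> integral J f"
    by (rule has_integral_le[OF LJ fJ]) (use fL J(4) in blast)
  also have "\<dots> \<le> integral {0..1} f"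
    by (rule integral_subset_le[OF J(2)]) (use cf[OF J(2)] cf[of "{0..1}"] fnn in \<open>auto simp: J(1) intro: integrable_continuous_interval\<close>)
  finally have "integral {0..1} f > 1" using key by simp
  then show ?thesis unfolding f_def using sp by (intro exI[of _ "\<sigma>\<^sup>2"]) auto
qed


lemma W_per0: "periodic1 (W u)"
  using W_per[of 0 u] by simp

lemma W_d1: "(W u has_real_derivative (T1 n (aa u 0) (B u) x - V' x)) (at x)"
  unfolding W_def[abs_def] by (intro DERIV_diff trig_d1 dV)

lemma W_d2: "((\<lambda>x. T1 n (aa u 0) (B u) x - V' x) has_real_derivative (T2 n (aa u 0) (B u) x - V'' x)) (at x)"
  by (intro DERIV_diff trig_d2 dV')

lemma W_c2: "continuous_on UNIV (\<lambda>x. T2 n (aa u 0) (B u) x - V'' x)"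
  by (intro continuous_intros T2_cont cV'')

lemma Q1: "hh u t = integral {0..1} (\<lambda>x. c / (t + W u x) powr (1 / \<alpha>) * 1)"
  unfolding Q_def ..

lemma hh_small: "\<exists>t. good u t \<and> hh u t > 1"
proof -
  obtain x0 where x0: "x0 \<in> {0..1}" "\<And>x. W u x0 \<le> W u x"
    using periodic_min[OF W_per0 W_cont] by blast
  obtain K where K: "K > 0" "\<And>x. \<bar>x - x0\<bar> \<le> 1 \<Longrightarrow> W u x - W u x0 \<le> K * (x - x0)\<^sup>2"
    using quad_bound[OF W_d1 W_d2 W_c2 x0(2)] by blast
  have cY: "continuous_on {0..1} (\<lambda>x. W u x - W u x0)" by (intro continuous_intros W_cont)
  have Y0: "\<And>x. W u x - W u x0 \<ge> 0" using x0(2) by simp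
  obtain s where s: "s > 0" "integral {0..1} (\<lambda>x. c / (s + (W u x - W u x0)) powr (1 / \<alpha>) * 1) > 1"
    using blowup[OF cY Y0 x0(1) K(1) K(2)] by blast
  have g: "good u (s - W u x0)" unfolding good_def
  proof
    fix x
    have "s - W u x0 + W u x = s + (W u x - W u x0)" by simp
    then show "0 < s - W u x0 + W u x" using s(1) Y0[of x] by linarith
  qed
  have "hh u (s - W u x0) = integral {0..1} (\<lambda>x. c / (s + (W u x - W u x0)) powr (1 / \<alpha>) * 1)"
    unfolding Q1 by (simp add: algebra_simps)
  then show ?thesis using g s(2) by auto
qed

lemma good_mono: "good u t \<Longrightarrow> t \<le> t' \<Longrightarrow> good u t'"
  unfolding good_def by (meson add_le_cancel_right less_le_trans)

lemma hh_cont_pt: "good u t \<Longrightarrow> continuous_on {0..1} (\<lambda>x. c / (t + W u x) powr (1 / \<alpha>) * 1)"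
  by (rule Psi_cont) (auto simp: good_def intro!: continuous_intros W_cont)

lemma hh_mono:
  assumes g: "good u t" and tt: "t < t'"
  shows "hh u t' < hh u t"
proof -
  have g': "good u t'" using good_mono[OF g] tt by simp
  have "0 < integral {0..1} (\<lambda>x. c / (t + W u x) powr (1 / \<alpha>) * 1 - c / (t' + W u x) powr (1 / \<alpha>) * 1)"
  proof (rule integral_pos01)
    show "continuous_on {0..1} (\<lambda>x. c / (t + W u x) powr (1 / \<alpha>) * 1 - c / (t' + W u x) powr (1 / \<alpha>) * 1)"
      by (intro continuous_intros hh_cont_pt g g')
    fix x :: real
    have p1: "t + W u x > 0" using g unfolding good_def by blast
    have "(t + W u x) powr (1 / \<alpha>) < (t' + W u x) powr (1 / \<alpha>)"
      using p1 tt a_pos by (intro powr_less_mono2) auto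
    then have "c / (t' + W u x) powr (1 / \<alpha>) < c / (t + W u x) powr (1 / \<alpha>)"
      using c_pos p1 by (intro divide_strict_left_mono) (auto intro!: mult_pos_pos)
    then show "0 < c / (t + W u x) powr (1 / \<alpha>) * 1 - c / (t' + W u x) powr (1 / \<alpha>) * 1" by simp
  qed
  also have "\<dots> = hh u t - hh u t'"
    unfolding Q1 by (rule integral_diff[OF integrable01 integrable01]) (intro hh_cont_pt g g')+
  finally show ?thesis by simp
qed

lemma hh_large: "\<exists>t. good u t \<and> hh u t < 1"
proof -
  obtain x0 where x0: "x0 \<in> {0..1}" "\<And>x. W u x0 \<le> W u x"
    using periodic_min[OF W_per0 W_cont] by blast
  define s where "s = (2 * c) powr \<alpha>"
  have sp: "s > 0" unfolding s_def using c_pos by simp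
  have s1: "s powr (1 / \<alpha>) = 2 * c" unfolding s_def using c_pos a_pos by (simp add: powr_powr)
  define t where "t = s - W u x0"
  have ge: "t + W u x \<ge> s" for x unfolding t_def using x0(2)[of x] by simp
  have g: "good u t" unfolding good_def using ge sp by (meson less_le_trans)
  have "\<bar>hh u t\<bar> \<le> 1/2"
    unfolding Q1
  proof (rule int_bound01[OF hh_cont_pt[OF g]])
    fix x :: real
    have "s powr (1 / \<alpha>) \<le> (t + W u x) powr (1 / \<alpha>)" using ge sp a_pos by (intro powr_mono2) auto
    then have "c / (t + W u x) powr (1 / \<alpha>) \<le> c / s powr (1 / \<alpha>)"
      using c_pos sp by (intro divide_left_mono) (auto intro!: mult_pos_pos)
    also have "\<dots> = 1/2" unfolding s1 using c_pos by simp
    finally show "\<bar>c / (t + W u x) powr (1 / \<alpha>) * 1\<bar> \<le> 1/2" using c_pos by simp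
  qed
  then show ?thesis using g by (intro exI[of _ t]) auto
qed

lemma hh_cont_t:
  assumes "\<And>t. t \<in> {t1..t2} \<Longrightarrow> good u t"
  shows "continuous_on {t1..t2} (hh u)"
  unfolding continuous_on_iff
proof (intro ballI allI impI)
  fix t e :: real assume t: "t \<in> {t1..t2}" and e: "e > 0"
  have "\<exists>\<delta>>0. \<forall>u' t'. (\<forall>i<2*n. \<bar>u' i - u i\<bar> < \<delta>) \<longrightarrow> \<bar>t' - t\<bar> < \<delta> \<longrightarrow>
     good u' t' \<and> \<bar>hh u' t' - hh u t\<bar> < e"
    by (rule Q_cont[OF assms[OF t] continuous_on_const _ e]) simp
  then obtain \<delta> where d: "\<delta> > 0" "\<And>u' t'. (\<forall>i<2*n. \<bar>u' i - u i\<bar> < \<delta>) \<Longrightarrow> \<bar>t' - t\<bar> < \<delta> \<Longrightarrow>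
     good u' t' \<and> \<bar>hh u' t' - hh u t\<bar> < e" by blast
  show "\<exists>d>0. \<forall>x'\<in>{t1..t2}. dist x' t < d \<longrightarrow> dist (hh u x') (hh u t) < e"
    using d by (intro exI[of _ \<delta>]) (auto simp: dist_real_def)
qed

lemma hh_root: "\<exists>!t. good u t \<and> hh u t = 1"
proof -
  obtain t1 where t1: "good u t1" "hh u t1 > 1" using hh_small by blast
  obtain t2 where t2: "good u t2" "hh u t2 < 1" using hh_large by blast
  have t12: "t1 \<le> t2"
  proof (rule ccontr)
    assume "\<not> t1 \<le> t2"
    then have "hh u t1 < hh u t2" using hh_mono[OF t2(1)] by simp
    then show False using t1 t2 by simp
  qed
  have gi: "good u t" if "t \<in> {t1..t2}" for t using good_mono[OF t1(1)] that by simp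
  obtain t where t: "t1 \<le> t" "t \<le> t2" "hh u t = 1"
    using IVT2'[of "hh u" t2 1 t1] t1 t2 t12 hh_cont_t[OF gi] by force
  show ?thesis
  proof (rule ex1I[of _ t])
    show "good u t \<and> hh u t = 1" using gi t by auto
    fix t' assume t': "good u t' \<and> hh u t' = 1"
    show "t' = t"
    proof (rule ccontr)
      assume "t' \<noteq> t"
      then consider "t' < t" | "t < t'" by linarith
      then show False
      proof cases
        case 1 then show False using hh_mono[of u t' t] t' t by simp
      next
        case 2 then show False using hh_mono[of u t t'] t' t gi by simp
      qed
    qed
  qed
qed

definition aZ :: "(nat \<Rightarrow> real) \<Rightarrow> real" where
  "aZ u = (THE t. good u t \<and> hh u t = 1)"

lemma aZ: "good u (aZ u)" "hh u (aZ u) = 1"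
  using theI'[OF hh_root[of u]] unfolding aZ_def by auto

lemma aZ_cont:
  assumes ep: "\<epsilon> > 0"
  shows "\<exists>\<delta>>0. \<forall>u. (\<forall>i<2*n. \<bar>u i - u0 i\<bar> < \<delta>) \<longrightarrow> \<bar>aZ u - aZ u0\<bar> < \<epsilon>"
proof -
  define t0 where "t0 = aZ u0"
  have cW: "continuous_on {0..1} (\<lambda>x. t0 + W u0 x)" by (intro continuous_intros W_cont)
  obtain x1 where x1: "\<And>x. t0 + W u0 x1 \<le> t0 + W u0 x"
    using periodic_min[OF W_per cW] by blast
  define \<mu> where "\<mu> = t0 + W u0 x1"
  have mu: "\<mu> > 0" unfolding \<mu>_def using aZ(1)[of u0] unfolding t0_def good_def by blast
  define e where "e = min \<epsilon> (\<mu>/2)"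
  have ep': "e > 0" "e \<le> \<epsilon>" "e \<le> \<mu>/2" unfolding e_def using ep mu by auto
  have gl: "good u0 (t0 - e)" unfolding good_def
  proof
    fix x have "\<mu> \<le> t0 + W u0 x" using x1 unfolding \<mu>_def by blast
    then show "0 < t0 - e + W u0 x" using ep' mu by linarith
  qed
  have gh: "good u0 (t0 + e)" using good_mono[OF aZ(1)[of u0]] ep' unfolding t0_def by simp
  have h1: "hh u0 (t0 - e) > 1" using hh_mono[OF gl, of t0] aZ(2)[of u0] ep' unfolding t0_def by simp
  have h2: "hh u0 (t0 + e) < 1" using hh_mono[OF aZ(1)[of u0], of "t0 + e"] aZ(2)[of u0] ep' unfolding t0_def by simp
  define \<eta> where "\<eta> = min (hh u0 (t0 - e) - 1) (1 - hh u0 (t0 + e))"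
  have eta: "\<eta> > 0" unfolding \<eta>_def using h1 h2 by simp
  have "\<exists>\<delta>>0. \<forall>u t. (\<forall>i<2*n. \<bar>u i - u0 i\<bar> < \<delta>) \<longrightarrow> \<bar>t - (t0 - e)\<bar> < \<delta> \<longrightarrow>
     good u t \<and> \<bar>hh u t - hh u0 (t0 - e)\<bar> < \<eta>"
    by (rule Q_cont[OF gl continuous_on_const _ eta]) simp
  then obtain d1 where d1: "d1 > 0" "\<And>u t. (\<forall>i<2*n. \<bar>u i - u0 i\<bar> < d1) \<Longrightarrow> \<bar>t - (t0 - e)\<bar> < d1 \<Longrightarrow>
     good u t \<and> \<bar>hh u t - hh u0 (t0 - e)\<bar> < \<eta>" by blast
  have "\<exists>\<delta>>0. \<forall>u t. (\<forall>i<2*n. \<bar>u i - u0 i\<bar> < \<delta>) \<longrightarrow> \<bar>t - (t0 + e)\<bar> < \<delta> \<longrightarrow>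
     good u t \<and> \<bar>hh u t - hh u0 (t0 + e)\<bar> < \<eta>"
    by (rule Q_cont[OF gh continuous_on_const _ eta]) simp
  then obtain d2 where d2: "d2 > 0" "\<And>u t. (\<forall>i<2*n. \<bar>u i - u0 i\<bar> < d2) \<Longrightarrow> \<bar>t - (t0 + e)\<bar> < d2 \<Longrightarrow>
     good u t \<and> \<bar>hh u t - hh u0 (t0 + e)\<bar> < \<eta>" by blast
  show ?thesis
  proof (intro exI[of _ "min d1 d2"] conjI allI impI)
    show "min d1 d2 > 0" using d1 d2 by simp
    fix u assume u: "\<forall>i<2*n. \<bar>u i - u0 i\<bar> < min d1 d2"
    have A1: "good u (t0 - e)" "hh u (t0 - e) > 1"
      using d1(2)[of u "t0 - e"] u d1(1) unfolding \<eta>_def by auto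
    have A2: "good u (t0 + e)" "hh u (t0 + e) < 1"
      using d2(2)[of u "t0 + e"] u d2(1) unfolding \<eta>_def by auto
    have lo: "t0 - e < aZ u"
    proof (rule ccontr)
      assume "\<not> t0 - e < aZ u"
      then have "aZ u \<le> t0 - e" by simp
      then have "hh u (t0 - e) \<le> hh u (aZ u)"
        using hh_mono[OF aZ(1)[of u], of "t0 - e"] by (cases "aZ u = t0 - e") auto
      then show False using A1 aZ(2)[of u] by simp
    qed
    have hi: "aZ u < t0 + e"
    proof (rule ccontr)
      assume "\<not> aZ u < t0 + e"
      then have "t0 + e \<le> aZ u" by simp
      then have "hh u (aZ u) \<le> hh u (t0 + e)"
        using hh_mono[OF A2(1), of "aZ u"] by (cases "aZ u = t0 + e") auto
      then show False using A2 aZ(2)[of u] by simp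
    qed
    show "\<bar>aZ u - aZ u0\<bar> < \<epsilon>" using lo hi ep' unfolding t0_def by auto
  qed
qed


definition ec :: "nat \<Rightarrow> real \<Rightarrow> real" where
  "ec i x = (if i < n then cos (2 * pi * real (i + 1) * x) else sin (2 * pi * real (i - n + 1) * x))"

lemma ec_cont: "continuous_on S (ec i)"
  unfolding ec_def by (cases "i < n") (simp_all add: continuous_intros)

lemma ec_bound: "\<bar>ec i x\<bar> \<le> 1"
  unfolding ec_def by auto

definition F :: "(nat \<Rightarrow> real) \<Rightarrow> nat \<Rightarrow> real" where
  "F u i = (if i < 2 * n then Q (ec i) u (aZ u) else 0)"

lemma Q_le_hh:
  assumes g: "good u t" and ce: "continuous_on {0..1} e" and eb: "\<And>x. \<bar>e x\<bar> \<le> 1"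
  shows "\<bar>Q e u t\<bar> \<le> hh u t"
proof -
  have "norm (integral {0..1} (\<lambda>x. c / (t + W u x) powr (1 / \<alpha>) * e x)) \<le> integral {0..1} (\<lambda>x. c / (t + W u x) powr (1 / \<alpha>) * 1)"
  proof (rule integral_norm_bound_integral[OF integrable01 integrable01])
    show "continuous_on {0..1} (\<lambda>x. c / (t + W u x) powr (1 / \<alpha>) * e x)"
      by (rule Psi_cont) (use g ce in \<open>auto simp: good_def intro!: continuous_intros W_cont\<close>)
    show "continuous_on {0..1} (\<lambda>x. c / (t + W u x) powr (1 / \<alpha>) * 1)" by (rule hh_cont_pt[OF g])
    fix x
    have p: "c / (t + W u x) powr (1 / \<alpha>) \<ge> 0" using c_pos by simp
    have "\<bar>c / (t + W u x) powr (1 / \<alpha>) * e x\<bar> = c / (t + W u x) powr (1 / \<alpha>) * \<bar>e x\<bar>"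
      unfolding abs_mult using p by (simp only: abs_of_nonneg)
    also have "\<dots> \<le> c / (t + W u x) powr (1 / \<alpha>) * 1" by (rule mult_left_mono[OF eb p])
    finally show "norm (c / (t + W u x) powr (1 / \<alpha>) * e x) \<le> c / (t + W u x) powr (1 / \<alpha>) * 1"
      by simp
  qed
  then show ?thesis unfolding Q_def by simp
qed

lemma F_bound: "\<bar>F u i\<bar> \<le> 1"
  using Q_le_hh[OF aZ(1)[of u] ec_cont[of "{0..1}" i] ec_bound[of i]] aZ(2)[of u] unfolding F_def by auto

lemma F_supp: "2 * n \<le> i \<Longrightarrow> F u i = 0"
  unfolding F_def by simp

lemma F_cont: "continuous_on UNIV (\<lambda>u. F u i)"
proof (cases "i < 2 * n")
  case False
  then show ?thesis unfolding F_def by simp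
next
  case True
  show ?thesis
  proof (rule cont_prod[where N="2 * n"])
    fix u0 :: "nat \<Rightarrow> real" and \<epsilon> :: real assume e: "\<epsilon> > 0"
    have "\<exists>\<delta>>0. \<forall>u t. (\<forall>i<2*n. \<bar>u i - u0 i\<bar> < \<delta>) \<longrightarrow> \<bar>t - aZ u0\<bar> < \<delta> \<longrightarrow>
       good u t \<and> \<bar>Q (ec i) u t - Q (ec i) u0 (aZ u0)\<bar> < \<epsilon>"
      by (rule Q_cont[OF aZ(1) ec_cont _ e]) (rule ec_bound)
    then obtain d1 where d1: "d1 > 0" "\<And>u t. (\<forall>i<2*n. \<bar>u i - u0 i\<bar> < d1) \<Longrightarrow> \<bar>t - aZ u0\<bar> < d1 \<Longrightarrow>
       good u t \<and> \<bar>Q (ec i) u t - Q (ec i) u0 (aZ u0)\<bar> < \<epsilon>" by blast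
    obtain d2 where d2: "d2 > 0" "\<And>u. (\<forall>i<2*n. \<bar>u i - u0 i\<bar> < d2) \<Longrightarrow> \<bar>aZ u - aZ u0\<bar> < d1"
      using aZ_cont[OF d1(1), of u0] by blast
    show "\<exists>\<delta>>0. \<forall>u. (\<forall>i<2 * n. \<bar>u i - u0 i\<bar> < \<delta>) \<longrightarrow> \<bar>F u i - F u0 i\<bar> < \<epsilon>"
    proof (intro exI[of _ "min d1 d2"] conjI allI impI)
      show "min d1 d2 > 0" using d1 d2 by simp
      fix u assume u: "\<forall>i<2 * n. \<bar>u i - u0 i\<bar> < min d1 d2"
      have "\<bar>aZ u - aZ u0\<bar> < d1" using d2(2) u by simp
      then show "\<bar>F u i - F u0 i\<bar> < \<epsilon>" using d1(2)[of u "aZ u"] u True unfolding F_def by simp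
    qed
  qed
qed


lemma F_fixed: "\<exists>u. F u = u"
proof -
  define R where "R = real (2 * n) + 1"
  have Rp: "R \<ge> 1" unfolding R_def by simp
  define f where "f = (\<lambda>v i. F (\<lambda>i. R * v i) i / R)"
  have sc: "continuous_on UNIV (\<lambda>v::nat\<Rightarrow>real. \<lambda>i. R * v i)"
    by (intro continuous_on_coordinatewise_then_product continuous_intros continuous_on_product_coordinates)
  have cf: "continuous_on UNIV f" unfolding f_def
    apply (rule continuous_on_coordinatewise_then_product)
    apply (intro continuous_intros)
    apply (rule continuous_on_compose2[OF F_cont sc])
    using Rp by auto
  have supp: "\<And>v i. 2 * n \<le> i \<Longrightarrow> f v i = 0" unfolding f_def using F_supp by simp
  have bnd: "(\<Sum>i<2*n. (f v i)\<^sup>2) \<le> 1" for v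
  proof -
    have "(\<Sum>i<2*n. (f v i)\<^sup>2) \<le> (\<Sum>i<2*n. 1 / R)"
    proof (rule sum_mono)
      fix i
      have h1: "\<bar>f v i\<bar> \<le> 1 / R" unfolding f_def using F_bound Rp by (simp add: divide_right_mono)
      have h2: "1 / R \<le> 1" using Rp by simp
      have h3: "\<bar>f v i\<bar> \<le> 1" using h1 h2 by linarith
      have "\<bar>f v i\<bar> * \<bar>f v i\<bar> \<le> 1 / R * 1" by (rule mult_mono[OF h1 h3]) (use Rp in auto)
      then show "(f v i)\<^sup>2 \<le> 1 / R" by (simp add: power2_eq_square abs_mult[symmetric])
    qed
    also have "\<dots> = real (2 * n) / R" by simp
    also have "\<dots> \<le> 1" using Rp unfolding R_def by simp
    finally show ?thesis .
  qed
  obtain v where v: "f v = v" using brouwer_nat[OF cf supp bnd] by blast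
  define u where "u = (\<lambda>i. R * v i)"
  have "F u i = u i" for i
  proof -
    have "F u i / R = v i" using fun_cong[OF v, of i] unfolding f_def u_def by simp
    then show ?thesis unfolding u_def using Rp by (simp add: field_simps)
  qed
  then show ?thesis by blast
qed

lemma rot_fwd:
  fixes P Q C S :: real assumes nz: "P\<^sup>2 + Q\<^sup>2 \<noteq> 0"
  shows "(P * (P * C - Q * S) + Q * (Q * C + P * S)) / (P\<^sup>2 + Q\<^sup>2) = C"
    and "(P * (Q * C + P * S) - Q * (P * C - Q * S)) / (P\<^sup>2 + Q\<^sup>2) = S"
proof -
  have "P * (P * C - Q * S) + Q * (Q * C + P * S) = C * (P\<^sup>2 + Q\<^sup>2)" by (simp add: algebra_simps power2_eq_square)
  then show "(P * (P * C - Q * S) + Q * (Q * C + P * S)) / (P\<^sup>2 + Q\<^sup>2) = C" using nz by simp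
  have "P * (Q * C + P * S) - Q * (P * C - Q * S) = S * (P\<^sup>2 + Q\<^sup>2)" by (simp add: algebra_simps power2_eq_square)
  then show "(P * (Q * C + P * S) - Q * (P * C - Q * S)) / (P\<^sup>2 + Q\<^sup>2) = S" using nz by simp
qed

lemma existence: "\<exists>a b. in_C n V a b \<and> system_S \<alpha> j n V p q a b"
proof -
  obtain u where u: "F u = u" using F_fixed by blast
  define t where "t = aZ u"
  define a where "a = aa u t"
  define b where "b = B u"
  have C: "in_C n V a b" unfolding a_def b_def t_def using aZ(1) good_inC by blast
  have mfe: "mf a b x = c / (t + W u x) powr (1 / \<alpha>)" for x unfolding a_def b_def by (rule mf_aa)
  have I1: "integral {0..1} (mf a b) = 1"
    using aZ(2)[of u] unfolding Q_def t_def[symmetric] mfe by simp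
  have Ic: "integral {0..1} (\<lambda>y. mf a b y * cos (2 * pi * real k * y)) = (p k * a k + q k * b k) / ((p k)\<^sup>2 + (q k)\<^sup>2)"
    and Is: "integral {0..1} (\<lambda>y. mf a b y * sin (2 * pi * real k * y)) = (p k * b k - q k * a k) / ((p k)\<^sup>2 + (q k)\<^sup>2)"
    if k: "k \<in> {1..n}" for k
  proof -
    have nz: "(p k)\<^sup>2 + (q k)\<^sup>2 \<noteq> 0" using pq k by (metis less_irrefl)
    have k1: "k - 1 < 2 * n" "\<not> n + k - 1 < n" "n + k - 1 < 2 * n" "k - 1 < n" using k by auto
    have ec1: "ec (k - 1) y = cos (2 * pi * real k * y)" for y unfolding ec_def using k by auto
    have ec2: "ec (n + k - 1) y = sin (2 * pi * real k * y)" for y unfolding ec_def using k by auto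
    have "integral {0..1} (\<lambda>y. mf a b y * cos (2 * pi * real k * y))
        = integral {0..1} (\<lambda>x. c / (t + W u x) powr (1 / \<alpha>) * ec (k - 1) x)"
      unfolding ec1 mfe ..
    also have "\<dots> = F u (k - 1)" unfolding F_def Q_def t_def using k1(1) by simp
    also have "\<dots> = u (k - 1)" using u by simp
    also have "\<dots> = (p k * a k + q k * b k) / ((p k)\<^sup>2 + (q k)\<^sup>2)"
      unfolding a_def b_def aa_def A_def B_def using k rot_fwd(1)[OF nz, of "u (k - 1)" "u (n + k - 1)"] by simp
    finally show "integral {0..1} (\<lambda>y. mf a b y * cos (2 * pi * real k * y)) = (p k * a k + q k * b k) / ((p k)\<^sup>2 + (q k)\<^sup>2)" .
    have "integral {0..1} (\<lambda>y. mf a b y * sin (2 * pi * real k * y))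
        = integral {0..1} (\<lambda>x. c / (t + W u x) powr (1 / \<alpha>) * ec (n + k - 1) x)"
      unfolding ec2 mfe ..
    also have "\<dots> = F u (n + k - 1)" unfolding F_def Q_def t_def using k1(3) by simp
    also have "\<dots> = u (n + k - 1)" using u by simp
    also have "\<dots> = (p k * b k - q k * a k) / ((p k)\<^sup>2 + (q k)\<^sup>2)"
      unfolding a_def b_def aa_def A_def B_def using k rot_fwd(2)[OF nz, of "u (k - 1)" "u (n + k - 1)"] by simp
    finally show "integral {0..1} (\<lambda>y. mf a b y * sin (2 * pi * real k * y)) = (p k * b k - q k * a k) / ((p k)\<^sup>2 + (q k)\<^sup>2)" .
  qed
  have "system_S \<alpha> j n V p q a b" using S_iff[OF C] I1 Ic Is by blast
  then show ?thesis using C by blast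
qed

end


theorem theorem1p1:
  fixes \<alpha> j :: real and V :: "real \<Rightarrow> real" and n :: nat and p q :: "nat \<Rightarrow> real"
  assumes "0 < \<alpha>" "\<alpha> \<le> 2" "j \<noteq> 0" "C2_T V"
    and "\<forall>k\<in>{1..n}. (p k)\<^sup>2 + (q k)\<^sup>2 > 0"
    and "cond_M (trig n p q)" "cond_W (trig n p q)"
  shows "(\<exists>!mH. solves_P \<alpha> j V (trig n p q) (fst mH) (snd mH)) \<and>
    (\<exists>a b. in_C n V a b \<and> system_S \<alpha> j n V p q a b \<and>
       (\<forall>a' b'. in_C n V a' b' \<and> system_S \<alpha> j n V p q a' b' \<longrightarrow>
          (\<forall>k\<le>n. a' k = a k) \<and> (\<forall>k\<in>{1..n}. b' k = b k)) \<and>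
       solves_P \<alpha> j V (trig n p q)
         (\<lambda>x. c_j \<alpha> j / (trig n a b x - V x) powr (1 / \<alpha>)) (a 0 - p 0))"
proof -
  obtain V' V'' where dV: "\<And>x. (V has_real_derivative V' x) (at x)"
    and dV': "\<And>x. (V' has_real_derivative V'' x) (at x)" and cV'': "continuous_on UNIV V''"
    and Vper: "periodic1 V"
    using assms(4) unfolding C2_T_def by blast
  interpret mfg \<alpha> j V V' V'' n p q
    by (unfold_locales) (use assms dV dV' cV'' Vper in auto)
  obtain a b where C: "in_C n V a b" and S: "system_S \<alpha> j n V p q a b" using existence by blast
  have cond: "integral {0..1} (mf a b) = 1 \<and>
     (\<forall>k\<in>{1..n}. integral {0..1} (\<lambda>y. mf a b y * cos (2 * pi * real k * y))
               = (p k * a k + q k * b k) / ((p k)\<^sup>2 + (q k)\<^sup>2) \<and>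
       integral {0..1} (\<lambda>y. mf a b y * sin (2 * pi * real k * y))
               = (p k * b k - q k * a k) / ((p k)\<^sup>2 + (q k)\<^sup>2))"
    using S_iff[OF C] S by blast
  have P: "solves_P \<alpha> j V G (mf a b) (a 0 - p 0)"
    by (rule S_to_P[OF C]) (use cond in auto)
  have mfe: "mf a b = (\<lambda>x. c_j \<alpha> j / (trig n a b x - V x) powr (1 / \<alpha>))"
    by (rule ext) (simp add: mf_def)
  have part1: "\<exists>!mH. solves_P \<alpha> j V G (fst mH) (snd mH)"
  proof (rule ex1I[of _ "(mf a b, a 0 - p 0)"])
    show "solves_P \<alpha> j V G (fst (mf a b, a 0 - p 0)) (snd (mf a b, a 0 - p 0))" using P by simp
    fix mH assume "solves_P \<alpha> j V G (fst mH) (snd mH)"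
    then have "fst mH = mf a b \<and> snd mH = a 0 - p 0" using P_unique[OF _ P] by blast
    then show "mH = (mf a b, a 0 - p 0)" by (simp add: prod_eq_iff)
  qed
  have uniq: "(\<forall>k\<le>n. a' k = a k) \<and> (\<forall>k\<in>{1..n}. b' k = b k)"
    if C': "in_C n V a' b'" and S': "system_S \<alpha> j n V p q a' b'" for a' b'
  proof -
    have cond': "integral {0..1} (mf a' b') = 1 \<and>
     (\<forall>k\<in>{1..n}. integral {0..1} (\<lambda>y. mf a' b' y * cos (2 * pi * real k * y))
               = (p k * a' k + q k * b' k) / ((p k)\<^sup>2 + (q k)\<^sup>2) \<and>
       integral {0..1} (\<lambda>y. mf a' b' y * sin (2 * pi * real k * y))
               = (p k * b' k - q k * a' k) / ((p k)\<^sup>2 + (q k)\<^sup>2))"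
      using S_iff[OF C'] S' by blast
    have P': "solves_P \<alpha> j V G (mf a' b') (a' 0 - p 0)"
      by (rule S_to_P[OF C']) (use cond' in auto)
    have eq: "mf a' b' = mf a b" and eq0: "a' 0 = a 0" using P_unique[OF P' P] by auto
    have eqk: "a' k = a k \<and> b' k = b k" if k: "k \<in> {1..n}" for k
    proof -
      have nz: "(p k)\<^sup>2 + (q k)\<^sup>2 \<noteq> 0" using assms(5) k by (metis less_irrefl)
      let ?D = "(p k)\<^sup>2 + (q k)\<^sup>2"
      have "(p k * a' k + q k * b' k) / ?D = integral {0..1} (\<lambda>y. mf a' b' y * cos (2 * pi * real k * y))"
        using cond' k by simp
      also have "\<dots> = integral {0..1} (\<lambda>y. mf a b y * cos (2 * pi * real k * y))" unfolding eq ..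
      also have "\<dots> = (p k * a k + q k * b k) / ?D" using cond k by simp
      finally have c1: "(p k * a' k + q k * b' k) / ?D = (p k * a k + q k * b k) / ?D" .
      have "(p k * b' k - q k * a' k) / ?D = integral {0..1} (\<lambda>y. mf a' b' y * sin (2 * pi * real k * y))"
        using cond' k by simp
      also have "\<dots> = integral {0..1} (\<lambda>y. mf a b y * sin (2 * pi * real k * y))" unfolding eq ..
      also have "\<dots> = (p k * b k - q k * a k) / ?D" using cond k by simp
      finally have c2: "(p k * b' k - q k * a' k) / ?D = (p k * b k - q k * a k) / ?D" .
      have "a' k = p k * ((p k * a' k + q k * b' k) / ?D) - q k * ((p k * b' k - q k * a' k) / ?D)"
        by (rule rot_inv(1)[OF nz, symmetric])
      also have "\<dots> = p k * ((p k * a k + q k * b k) / ?D) - q k * ((p k * b k - q k * a k) / ?D)"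
        unfolding c1 c2 ..
      also have "\<dots> = a k" by (rule rot_inv(1)[OF nz])
      finally have "a' k = a k" .
      moreover have "b' k = b k"
      proof -
        have "b' k = p k * ((p k * b' k - q k * a' k) / ?D) + q k * ((p k * a' k + q k * b' k) / ?D)"
          by (rule rot_inv(2)[OF nz, symmetric])
        also have "\<dots> = p k * ((p k * b k - q k * a k) / ?D) + q k * ((p k * a k + q k * b k) / ?D)"
          unfolding c1 c2 ..
        also have "\<dots> = b k" by (rule rot_inv(2)[OF nz])
        finally show ?thesis .
      qed
      ultimately show ?thesis by simp
    qed
    show ?thesis
    proof (intro conjI allI impI ballI)
      fix k assume "k \<le> n"
      then show "a' k = a k" using eq0 eqk by (cases "k = 0") auto
    next
      fix k assume "k \<in> {1..n}"
      then show "b' k = b k" using eqk by blast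
    qed
  qed
  show ?thesis using part1 C S uniq P unfolding mfe by blast
qed

end
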